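(* Let $\ell\in\{0,1,2,\ldots\}$. (1) For $q>2$, $$\tilde\gamma_\ell(q)=\frac{\log^{\ell+1}(q-1)-\log^{\ell+1}(q-2)}{2(\ell+1)}-\ell!\sum_{k=1}^\infty\frac{(-1)^k2^k}{(k+1)!}\sum_{j=0}^{\ell}\frac{(-1)^j}{j!}\,s(k+1,\ell-j+1)\,\zeta_E^{(j)}(k+1,q).$$ (2) For $q>1$, $$\tilde\gamma_\ell(q)=\frac{\log^{\ell+1}q-\log^{\ell+1}(q-1)}{2(\ell+1)}-\ell!\sum_{k=1}^\infty\frac{1}{(2k+1)!}\sum_{j=0}^{\ell}\frac{(-1)^j}{j!}\,s(2k+1,\ell-j+1)\,\zeta_E^{(j)}(2k+1,q).$$
   Context: For $q>0$, $\zeta_E(z,q)=\sum_{n=0}^\infty (-1)^n (n+q)^{-z}$ for $\mathrm{Re}(z)>0$, extended by analytic continuation to an entire function of $z$; $\zeta_E^{(m)}(z,q)$ denotes $\frac{\partial^m}{\partial z^m}\zeta_E(z,q)$. The modified Stieltjes constants $\tilde\gamma_k(q)$ are defined by the Taylor expansion $\zeta_E(z,q)=\sum_{k=0}^\infty\frac{(-1)^k\tilde\gamma_k(q)}{k!}(z-1)^k$. $s(n,k)$ are the (signed) Stirling numbers of the first kind: $x(x-1)\cdots(x-n+1)=\sum_{k=0}^n s(n,k)x^k$ (with $s(n,k)=0$ for $k>n$). *)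

theory Defs
  imports "HOL-Complex_Analysis.Complex_Analysis" "HOL-Combinatorics.Stirling"
begin

definition zetaE :: "complex \<Rightarrow> real \<Rightarrow> complex" where
  "zetaE z q = (THE f. f holomorphic_on UNIV \<and>
      (\<forall>w. Re w > 0 \<longrightarrow> (\<lambda>n. (-1) ^ n * (complex_of_real (real n + q)) powr (- w)) sums f w)) z"

definition zetaE_deriv :: "nat \<Rightarrow> complex \<Rightarrow> real \<Rightarrow> complex" where
  "zetaE_deriv m z q = (deriv ^^ m) (\<lambda>w. zetaE w q) z"

definition mod_stieltjes :: "nat \<Rightarrow> real \<Rightarrow> complex" where
  "mod_stieltjes k q = (THE c :: nat \<Rightarrow> complex. \<forall>z.
      (\<lambda>k. (-1) ^ k * c k / fact k * (z - 1) ^ k) sums zetaE z q) k"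

definition stirling1s :: "nat \<Rightarrow> nat \<Rightarrow> int" where
  "stirling1s n k = (-1) ^ (n - k) * int (stirling n k)"

end

theory Submission
  imports Defs
begin


definition hq :: "real \<Rightarrow> complex \<Rightarrow> complex \<Rightarrow> complex" where
  "hq q s z = (z + of_real q) powr (-s)"

fun Dm :: "nat \<Rightarrow> (complex \<Rightarrow> complex) \<Rightarrow> complex \<Rightarrow> complex" where
  "Dm 0 f = f"
| "Dm (Suc m) f = (\<lambda>z. Dm m f z - Dm m f (z + 1))"

lemma Dm_cmult: "Dm m (\<lambda>z. c * f z) z = c * Dm m f z"
  by (induction m arbitrary: z) (simp_all add: algebra_simps)

lemma Dm_deriv:
  assumes "\<And>z. z \<in> U \<Longrightarrow> (f has_field_derivative f' z) (at z)"
    and "\<And>z. z \<in> U \<Longrightarrow> z + 1 \<in> U" and "z \<in> U"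
  shows "(Dm m f has_field_derivative Dm m f' z) (at z)"
  using assms(3)
proof (induction m arbitrary: z)
  case 0 then show ?case using assms(1) by simp
next
  case (Suc m)
  have a: "(Dm m f has_field_derivative Dm m f' z) (at z)" using Suc by blast
  have b: "(Dm m f has_field_derivative Dm m f' (z+1)) (at (z+1))" using Suc assms(2) by blast
  have c: "((\<lambda>z. Dm m f (z + 1)) has_field_derivative Dm m f' (z+1)) (at z)"
    using b DERIV_shift by blast
  show ?case using DERIV_diff[OF a c] by simp
qed

lemma hq_deriv:
  assumes "q > 0" "Im z = 0" "Re z \<ge> 0"
  shows "(hq q s has_field_derivative (- s * hq q (s + 1) z)) (at z)"
proof -
  have nz: "z + of_real q \<notin> \<real>\<^sub>\<le>\<^sub>0" using assms
    by (auto simp: nonpos_Reals_def complex_eq_iff)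
  have h1: "((\<lambda>w. w powr (-s)) has_field_derivative (-s) * (z + of_real q) powr (-s - 1)) (at (z + of_real q))"
    by (rule has_field_derivative_powr[OF nz])
  have "((\<lambda>w. (w + of_real q) powr (-s)) has_field_derivative (-s) * (z + of_real q) powr (-s - 1)) (at z)"
    using DERIV_shift[THEN iffD1, OF h1] by simp
  moreover have "-s - 1 = - (s + 1)" by simp
  ultimately show ?thesis unfolding hq_def by (simp only: mult_minus_left)
qed

lemma norm_hq: "q > 0 \<Longrightarrow> x \<ge> 0 \<Longrightarrow> norm (hq q s (of_real x)) = (x + q) powr (- Re s)"
  unfolding hq_def
  by (subst norm_powr_real_powr) auto

lemma Dm_bound:
  assumes "q > 0" "x \<ge> 0" "Re s + m > 0"
  shows "norm (Dm m (hq q s) (of_real x)) \<le> norm (pochhammer s m) * (x + q) powr (-(Re s + m))"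
  using assms(2,3)
proof (induction m arbitrary: s x)
  case 0
  then show ?case using norm_hq[OF assms(1)] by simp
next
  case (Suc m)
  define U where "U = {z. Im z = 0 \<and> Re z \<ge> 0}"
  define S where "S = closed_segment (complex_of_real x) (of_real x + 1)"
  define B where "B = norm s * norm (pochhammer (s + 1) m) * (x + q) powr (-(Re s + 1 + m))"
  have der: "(Dm m (hq q s) has_field_derivative Dm m (\<lambda>z. - s * hq q (s + 1) z) z) (at z)"
    if "z \<in> U" for z
    by (rule Dm_deriv[where U=U]) (use that hq_deriv[OF assms(1)] in \<open>auto simp: U_def\<close>)
  have SU: "S \<subseteq> U" 
    by (auto simp: S_def U_def in_segment Suc.prems)
  have bnd: "norm (Dm m (\<lambda>z. - s * hq q (s + 1) z) z) \<le> B" if "z \<in> S" for z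
  proof -
    obtain u where u: "0 \<le> u" "u \<le> 1" "z = of_real (x + u)"
      using \<open>z \<in> S\<close> by (auto simp: S_def in_segment scaleR_conv_of_real algebra_simps)
    have "norm (Dm m (\<lambda>z. - s * hq q (s + 1) z) z) = norm s * norm (Dm m (hq q (s+1)) (of_real (x+u)))"
      using Dm_cmult[of m "-s" "hq q (s+1)" z] by (simp add: norm_mult u(3))
    also have "\<dots> \<le> norm s * (norm (pochhammer (s+1) m) * (x + u + q) powr (-(Re (s+1) + m)))"
      by (intro mult_left_mono Suc.IH) (use Suc.prems u in auto)
    also have "\<dots> \<le> B" unfolding B_def
      by (simp add: mult.assoc, intro mult_left_mono powr_mono2') (use Suc.prems u assms in \<open>auto simp: add_ac\<close>)
    finally show ?thesis .
  qed
  have "norm (Dm m (hq q s) (of_real x) - Dm m (hq q s) (of_real x + 1)) \<le> B * norm (of_real x - (of_real x + 1::complex))"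
    by (rule field_differentiable_bound[where S=S])
       (use der SU bnd in \<open>auto simp: S_def intro: has_field_derivative_at_within\<close>)
  then show ?case
    by (simp add: B_def pochhammer_rec norm_mult add_ac)
qed


lemma alt_partial:
  fixes g :: "nat \<Rightarrow> complex"
  shows "(\<Sum>n<N. (-1)^n * (g n - g (Suc n))) = 2 * (\<Sum>n<N. (-1)^n * g n) - g 0 + (-1)^N * g N"
  by (induction N) (simp_all add: algebra_simps)

lemma alt_sums_diff:
  fixes g :: "nat \<Rightarrow> complex"
  assumes "g \<longlonglongrightarrow> 0" and "(\<lambda>n. (-1)^n * (g n - g (Suc n))) sums T"
  shows "(\<lambda>n. (-1)^n * g n) sums ((g 0 + T) / 2)"
proof -
  have e: "(\<Sum>n<N. (-1)^n * g n) = ((\<Sum>n<N. (-1)^n * (g n - g (Suc n))) + g 0 - (-1)^N * g N) / 2" for N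
    by (simp add: alt_partial)
  have z: "(\<lambda>N. (-1)^N * g N) \<longlonglongrightarrow> 0"
    by (rule tendsto_norm_zero_cancel) (use tendsto_norm_zero[OF assms(1)] in \<open>simp add: norm_mult norm_power\<close>)
  have "(\<lambda>N. ((\<Sum>n<N. (-1)^n * (g n - g (Suc n))) + g 0 - (-1)^N * g N) / 2) \<longlonglongrightarrow> (T + g 0 - 0) / 2"
    using assms(2) z unfolding sums_def by (intro tendsto_intros) auto
  then show ?thesis unfolding sums_def e by (simp add: add_ac)
qed

lemma summable_shift_powr:
  assumes "q > 0" "p > 1"
  shows "summable (\<lambda>n. (real n + q) powr (-p))"
proof (rule summable_comparison_test'[where N=1])
  show "summable (\<lambda>n. real n powr (-p))" using assms by (subst summable_real_powr_iff) auto
  fix n :: nat assume "n \<ge> 1"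
  then show "norm ((real n + q) powr (-p)) \<le> real n powr (-p)"
    using assms by (auto intro!: powr_mono2')
qed

lemma tendsto_shift_powr:
  assumes "q > 0" "p > 0"
  shows "(\<lambda>n. (real n + q) powr (-p)) \<longlonglongrightarrow> 0"
proof (rule tendsto_neg_powr)
  show "filterlim (\<lambda>n. real n + q) at_top sequentially"
    using filterlim_tendsto_add_at_top[OF tendsto_const[of q] filterlim_real_sequentially]
    by (simp add: add.commute)
qed (use assms in auto)

definition Fm :: "real \<Rightarrow> nat \<Rightarrow> complex \<Rightarrow> complex" where
  "Fm q m s = (\<Sum>j<m. Dm j (hq q s) 0 / 2 ^ Suc j) + (\<Sum>n. (-1)^n * Dm m (hq q s) (of_nat n)) / 2 ^ m"

lemma Dm_summable:
  assumes "q > 0" "Re s + m > 1"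
  shows "summable (\<lambda>n. norm ((-1)^n * Dm m (hq q s) (of_nat n)))"
proof (rule summable_comparison_test'[where N=0])
  show "summable (\<lambda>n. norm (pochhammer s m) * (real n + q) powr (-(Re s + m)))"
    by (intro summable_mult summable_shift_powr) (use assms in auto)
  fix n :: nat
  show "norm (norm ((-1)^n * Dm m (hq q s) (of_nat n))) \<le> norm (pochhammer s m) * (real n + q) powr (-(Re s + m))"
    using Dm_bound[OF assms(1), of "real n" s m] assms by (simp add: norm_mult norm_power)
qed

lemma Dm_tendsto:
  assumes "q > 0" "Re s + m > 0"
  shows "(\<lambda>n. Dm m (hq q s) (of_nat n)) \<longlonglongrightarrow> 0"
proof (rule Lim_null_comparison)
  show "\<forall>\<^sub>F n in sequentially. norm (Dm m (hq q s) (of_nat n)) \<le> norm (pochhammer s m) * (real n + q) powr (-(Re s + m))"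
  proof (intro always_eventually allI)
    fix n :: nat
    show "norm (Dm m (hq q s) (of_nat n)) \<le> norm (pochhammer s m) * (real n + q) powr (-(Re s + m))"
      using Dm_bound[OF assms(1), of "real n" s m] assms by simp
  qed
  show "(\<lambda>n. norm (pochhammer s m) * (real n + q) powr (-(Re s + m))) \<longlonglongrightarrow> 0"
    using tendsto_mult_left[OF tendsto_shift_powr[OF assms(1), of "Re s + m"], of "norm (pochhammer s m)"] assms
    by simp
qed

lemma Dm_step_sums:
  assumes "q > 0" "Re s + m > 0"
  shows "(\<lambda>n. (-1)^n * Dm m (hq q s) (of_nat n)) sums
           ((Dm m (hq q s) 0 + (\<Sum>n. (-1)^n * Dm (Suc m) (hq q s) (of_nat n))) / 2)"
proof -
  have "summable (\<lambda>n. (-1)^n * Dm (Suc m) (hq q s) (of_nat n))"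
    by (rule summable_norm_cancel, rule Dm_summable) (use assms in auto)
  then have "(\<lambda>n. (-1)^n * (Dm m (hq q s) (of_nat n) - Dm m (hq q s) (of_nat (Suc n)))) sums
        (\<Sum>n. (-1)^n * Dm (Suc m) (hq q s) (of_nat n))"
    by (simp add: summable_sums add_ac)
  from alt_sums_diff[OF Dm_tendsto[OF assms] this] show ?thesis by simp
qed

lemma Fm_Suc:
  assumes "q > 0" "Re s + m > 0"
  shows "Fm q (Suc m) s = Fm q m s"
proof -
  have "(\<Sum>n. (-1)^n * Dm m (hq q s) (of_nat n)) =
           (Dm m (hq q s) 0 + (\<Sum>n. (-1)^n * Dm (Suc m) (hq q s) (of_nat n))) / 2"
    using Dm_step_sums[OF assms] by (simp add: sums_iff)
  then show ?thesis unfolding Fm_def sum.lessThan_Suc by (simp add: field_simps del: Dm.simps) (metis distrib_left mult.left_commute)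
qed

lemma Fm_mono_eq:
  assumes "q > 0" "Re s + m > 0" "m \<le> m'"
  shows "Fm q m' s = Fm q m s"
  using assms(3)
proof (induction m' rule: dec_induct)
  case (step k)
  then show ?case using Fm_Suc[OF assms(1), of s k] assms(2) by simp
qed simp

lemma Fm_eq:
  assumes "q > 0" "Re s + m > 0" "Re s + m' > 0"
  shows "Fm q m' s = Fm q m s"
  by (metis Fm_mono_eq assms max.cobounded1 max.cobounded2)

lemma series_0:
  assumes "q > 0" "Re s > 0"
  shows "(\<lambda>n. (-1)^n * complex_of_real (real n + q) powr (- s)) sums Fm q 1 s"
proof -
  have "(\<lambda>n. (-1)^n * Dm 0 (hq q s) (of_nat n)) sums
           ((Dm 0 (hq q s) 0 + (\<Sum>n. (-1)^n * Dm (Suc 0) (hq q s) (of_nat n))) / 2)"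
    by (rule Dm_step_sums) (use assms in auto)
  moreover have "hq q s (of_nat n) = complex_of_real (real n + q) powr (- s)" for n
    by (simp add: hq_def)
  ultimately show ?thesis unfolding Fm_def by (simp add: add_divide_distrib)
qed


lemma Dm_holo: "(\<lambda>s. Dm j (hq q s) z) holomorphic_on UNIV"
proof (induction j arbitrary: z)
  case 0
  then show ?case unfolding hq_def by (simp, intro holomorphic_intros)
next
  case (Suc j)
  then show ?case by (simp, intro holomorphic_intros)
qed

lemma norm_pochhammer_le: "norm (pochhammer (s::complex) m) \<le> (norm s + m) ^ m"
proof (induction m)
  case (Suc m)
  have "norm (pochhammer s (Suc m)) = norm (s + of_nat m) * norm (pochhammer s m)"
    by (simp add: pochhammer_rec' norm_mult)
  also have "\<dots> \<le> (norm s + m) * (norm s + m) ^ m"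
    by (intro mult_mono Suc.IH) (auto intro: order.trans[OF norm_triangle_ineq])
  also have "\<dots> \<le> (norm s + Suc m) ^ Suc m"
    by (simp, intro mult_mono power_mono) auto
  finally show ?case .
qed simp

lemma holo_local:
  assumes "open S" "\<And>x. x \<in> S \<Longrightarrow> \<exists>d>0. f holomorphic_on ball x d"
  shows "f holomorphic_on S"
  unfolding holomorphic_on_def
proof
  fix x assume "x \<in> S"
  then obtain d where "d > 0" "f holomorphic_on ball x d" using assms(2) by blast
  then have "f field_differentiable at x"
    by (intro holomorphic_on_imp_differentiable_at[of f "ball x d"]) auto
  then show "f field_differentiable at x within S"
    by (rule field_differentiable_at_within)
qed

lemma Fm_holo_ball:
  assumes "q > 0" "Re s0 + m > 1"
  shows "\<exists>d>0. Fm q m holomorphic_on ball s0 d"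
proof -
  define d where "d = (Re s0 + m - 1) / 2"
  define \<sigma> where "\<sigma> = Re s0 - d"
  define C where "C = (norm s0 + d + m) ^ m"
  have d: "d > 0" using assms by (simp add: d_def)
  have \<sigma>: "\<sigma> + m > 1" using assms by (simp add: \<sigma>_def d_def field_simps)
  define f where "f = (\<lambda>n s. (-1)^n * Dm m (hq q s) (of_nat n))"
  have bnd: "norm (f n s) \<le> C * (real n + q) powr (-(\<sigma> + m))" if "n \<ge> 1" "s \<in> cball s0 d" for n s
  proof -
    have ns: "norm s \<le> norm s0 + d"
      using that(2) norm_triangle_ineq2[of s s0] by (auto simp: dist_norm norm_minus_commute)
    have Re: "Re s \<ge> \<sigma>"
      using that(2) abs_Re_le_cmod[of "s0 - s"] by (auto simp: \<sigma>_def dist_norm)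
    have "norm (f n s) = norm (Dm m (hq q s) (of_real (real n)))" by (simp add: f_def norm_mult norm_power)
    also have "\<dots> \<le> norm (pochhammer s m) * (real n + q) powr (-(Re s + m))"
      by (rule Dm_bound) (use assms \<sigma> Re in auto)
    also have "\<dots> \<le> C * (real n + q) powr (-(\<sigma> + m))"
    proof (intro mult_mono)
      show "norm (pochhammer s m) \<le> C"
      proof -
        have "(norm s + m)^m \<le> (norm s0 + d + m)^m" by (rule power_mono) (use ns in auto)
        then show ?thesis using norm_pochhammer_le[of s m] by (simp add: C_def)
      qed
      show "(real n + q) powr (-(Re s + m)) \<le> (real n + q) powr (-(\<sigma> + m))"
        by (rule powr_mono) (use Re that assms in auto)
    qed (use d in \<open>auto simp: C_def\<close>)
    finally show ?thesis .
  qed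
  have ul: "uniform_limit (cball s0 d) (\<lambda>N s. \<Sum>i<N. f i s) (\<lambda>s. \<Sum>i. f i s) sequentially"
  proof (rule Weierstrass_m_test_ev)
    show "\<forall>\<^sub>F n in sequentially. \<forall>s\<in>cball s0 d. norm (f n s) \<le> C * (real n + q) powr (-(\<sigma> + m))"
      using eventually_ge_at_top[of "1::nat"] by (rule eventually_mono) (use bnd in auto)
    show "summable (\<lambda>n. C * (real n + q) powr (-(\<sigma> + m)))"
      by (intro summable_mult summable_shift_powr) (use assms \<sigma> in auto)
  qed
  have ph: "(\<lambda>s. \<Sum>i<N. f i s) holomorphic_on UNIV" for N
    unfolding f_def by (intro holomorphic_intros holomorphic_on_subset[OF Dm_holo]) auto
  obtain "(\<lambda>s. \<Sum>i. f i s) holomorphic_on ball s0 d"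
  proof (rule holomorphic_uniform_limit[OF _ ul])
    show "\<forall>\<^sub>F n in sequentially. continuous_on (cball s0 d) (\<lambda>s. \<Sum>i<n. f i s) \<and> (\<lambda>s. \<Sum>i<n. f i s) holomorphic_on ball s0 d"
      using ph by (auto intro!: always_eventually holomorphic_on_imp_continuous_on holomorphic_on_subset[OF ph])
  qed auto
  then have "Fm q m holomorphic_on ball s0 d"
    unfolding Fm_def[abs_def] f_def
    by (intro holomorphic_intros holomorphic_on_subset[OF Dm_holo]) auto
  then show ?thesis using d by blast
qed

lemma Fm_holo:
  assumes "q > 0"
  shows "Fm q m holomorphic_on {s. Re s > 1 - real m}"
proof (rule holo_local)
  show "open {s. Re s > 1 - real m}" by (rule open_halfspace_Re_gt)
qed (use Fm_holo_ball[OF assms] in auto)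

definition Zc :: "real \<Rightarrow> complex \<Rightarrow> complex" where
  "Zc q s = Fm q (nat \<lceil>1 - Re s\<rceil> + 1) s"

lemma Zc_eq:
  assumes "q > 0" "Re s + m > 1"
  shows "Zc q s = Fm q m s"
proof -
  have "Re s + real (nat \<lceil>1 - Re s\<rceil> + 1) > 0"
    using of_nat_ceiling[of "1 - Re s"] by linarith
  then show ?thesis unfolding Zc_def using Fm_eq[OF assms(1), of s m "nat \<lceil>1 - Re s\<rceil> + 1"] assms by simp
qed

lemma Zc_holo:
  assumes "q > 0"
  shows "Zc q holomorphic_on UNIV"
proof (rule holo_local)
  fix s0 :: complex
  define m where "m = nat \<lceil>1 - Re s0\<rceil> + 1"
  have m: "Re s0 + m > 1" unfolding m_def using of_nat_ceiling[of "1 - Re s0"] by linarith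
  obtain d where d: "d > 0" "Fm q m holomorphic_on ball s0 d" using Fm_holo_ball[OF assms m] by blast
  define e where "e = min d (Re s0 + m - 1)"
  have e: "e > 0" using d m by (simp add: e_def)
  have h: "Fm q m holomorphic_on ball s0 e"
    by (rule holomorphic_on_subset[OF d(2)]) (auto simp: e_def)
  have "Re s + m > 1" if "s \<in> ball s0 e" for s
    using that abs_Re_le_cmod[of "s0 - s"] by (auto simp: e_def dist_norm)
  then have eq: "\<And>s. s \<in> ball s0 e \<Longrightarrow> Fm q m s = Zc q s" using Zc_eq[OF assms] by metis
  have "Zc q holomorphic_on ball s0 e"
    by (rule holomorphic_transform[OF h eq])
  then show "\<exists>d>0. Zc q holomorphic_on ball s0 d" using e by blast
qed auto

lemma Zc_sums:
  assumes "q > 0" "Re s > 0"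
  shows "(\<lambda>n. (-1)^n * complex_of_real (real n + q) powr (- s)) sums Zc q s"
  using series_0[OF assms] Zc_eq[OF assms(1), of s 1] assms by simp

lemma zetaE_eq:
  assumes "q > 0"
  shows "zetaE z q = Zc q z"
proof -
  have "(THE f. f holomorphic_on UNIV \<and>
      (\<forall>w. Re w > 0 \<longrightarrow> (\<lambda>n. (-1) ^ n * (complex_of_real (real n + q)) powr (- w)) sums f w)) = Zc q"
  proof (rule the_equality)
    show "Zc q holomorphic_on UNIV \<and>
      (\<forall>w. Re w > 0 \<longrightarrow> (\<lambda>n. (-1) ^ n * (complex_of_real (real n + q)) powr (- w)) sums Zc q w)"
      using Zc_holo[OF assms] Zc_sums[OF assms] by auto
  next
    fix f assume f: "f holomorphic_on UNIV \<and>
      (\<forall>w. Re w > 0 \<longrightarrow> (\<lambda>n. (-1) ^ n * (complex_of_real (real n + q)) powr (- w)) sums f w)"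
    show "f = Zc q"
    proof
      fix w
      have o: "open {z. Re z > 0}" using open_halfspace_Re_gt[of 0] by simp
      have ne: "{z. Re z > 0} \<noteq> {}" by (auto intro!: exI[of _ 1])
      have eq: "\<And>z. z \<in> {z. 0 < Re z} \<Longrightarrow> f z = Zc q z"
        using f Zc_sums[OF assms] sums_unique2 by blast
      show "f w = Zc q w"
        by (rule analytic_continuation_open[of "{z. Re z > 0}" UNIV f "Zc q", OF o _ ne _ _ _ _ eq])
           (use f Zc_holo[OF assms] in auto)
    qed
  qed
  then show ?thesis unfolding zetaE_def by simp
qed


lemma taylor_coeff_unique:
  fixes Z :: "complex \<Rightarrow> complex" and a :: "nat \<Rightarrow> complex"
  assumes "\<And>t. (\<lambda>k. a k * t ^ k) sums Z (1 + t)"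
  shows "a k = (deriv ^^ k) Z 1 / fact k"
proof -
  have "(Z \<circ> (\<lambda>x. 1 + x)) has_fps_expansion Abs_fps a"
    unfolding has_fps_expansion_def
  proof
    have "conv_radius a \<ge> norm (1::complex)"
      by (rule conv_radius_geI) (use assms[of 1] in \<open>auto simp: sums_iff\<close>)
    then show "0 < fps_conv_radius (Abs_fps a)"
      unfolding fps_conv_radius_def by (auto intro: less_le_trans[rotated])
    show "\<forall>\<^sub>F z in nhds 0. eval_fps (Abs_fps a) z = (Z \<circ> (+) 1) z"
      using assms by (auto intro!: always_eventually simp: eval_fps_def sums_iff)
  qed
  from fps_nth_fps_expansion[OF this, of k] show ?thesis
    by (simp add: higher_deriv_shift_0[of k Z 1])
qed

lemma mod_stieltjes_eq:
  assumes "q > 0"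
  shows "mod_stieltjes l q = (-1)^l * (deriv ^^ l) (Zc q) 1"
proof -
  have ze: "zetaE z q = Zc q z" for z using zetaE_eq[OF assms] .
  have "(THE c :: nat \<Rightarrow> complex. \<forall>z. (\<lambda>k. (-1) ^ k * c k / fact k * (z - 1) ^ k) sums zetaE z q)
        = (\<lambda>k. (-1)^k * (deriv ^^ k) (Zc q) 1)"
  proof (rule the_equality)
    show "\<forall>z. (\<lambda>k. (-1) ^ k * ((-1)^k * (deriv ^^ k) (Zc q) 1) / fact k * (z - 1) ^ k) sums zetaE z q"
    proof
      fix z
      have "(\<lambda>k. (deriv ^^ k) (Zc q) 1 / fact k * (z - 1) ^ k) sums Zc q z"
        by (rule holomorphic_power_series[of _ 1 "norm (z - 1) + 1"])
           (use Zc_holo[OF assms] holomorphic_on_subset in \<open>auto simp: dist_norm norm_minus_commute\<close>)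
      moreover have "(-1) ^ k * ((-1)^k * x) = (x::complex)" for k x
        by (simp flip: mult.assoc power_mult_distrib)
      ultimately show "(\<lambda>k. (-1) ^ k * ((-1)^k * (deriv ^^ k) (Zc q) 1) / fact k * (z - 1) ^ k) sums zetaE z q"
        by (simp add: ze)
    qed
  next
    fix c :: "nat \<Rightarrow> complex"
    assume c: "\<forall>z. (\<lambda>k. (-1) ^ k * c k / fact k * (z - 1) ^ k) sums zetaE z q"
    show "c = (\<lambda>k. (-1)^k * (deriv ^^ k) (Zc q) 1)"
    proof
      fix k
      have "(\<lambda>k. ((-1) ^ k * c k / fact k) * t ^ k) sums Zc q (1 + t)" for t
        using c[rule_format, of "1 + t"] by (simp add: ze)
      from taylor_coeff_unique[OF this, of k]
      have "(-1)^k * c k / fact k = (deriv ^^ k) (Zc q) 1 / fact k" .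
      then have "(-1)^k * c k = (deriv ^^ k) (Zc q) 1" by simp
      then have "(-1)^k * ((-1)^k * c k) = (-1)^k * (deriv ^^ k) (Zc q) 1" by simp
      then show "c k = (-1)^k * (deriv ^^ k) (Zc q) 1"
        by (simp flip: mult.assoc power_mult_distrib)
    qed
  qed
  then show ?thesis unfolding mod_stieltjes_def by simp
qed


lemma double_sums_swap:
  fixes f :: "nat \<Rightarrow> nat \<Rightarrow> complex"
  assumes s1: "\<And>n. summable (\<lambda>k. norm (f n k))" and s2: "summable (\<lambda>n. \<Sum>k. norm (f n k))"
  shows "(\<lambda>k. \<Sum>n. f n k) sums (\<Sum>n. \<Sum>k. f n k)" "(\<lambda>n. \<Sum>k. f n k) sums (\<Sum>n. \<Sum>k. f n k)"
proof -
  define F where "F = (\<lambda>(n, k). f n k)"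
  have hn: "((\<lambda>k. norm (F (n, k))) has_sum (\<Sum>k. norm (f n k))) UNIV" for n
    unfolding F_def using s1 by (auto intro!: sums_nonneg_imp_has_sum summable_sums)
  have g: "(\<lambda>n. \<Sum>k. norm (f n k)) summable_on UNIV"
    by (rule summable_nonneg_imp_summable_on_strong[OF s2]) (auto intro!: always_eventually suminf_nonneg s1)
  have "(\<lambda>p. norm (F p)) summable_on (UNIV \<times> UNIV)"
    by (rule summable_on_SigmaI[OF _ g]) (use hn in auto)
  then have Fs: "F summable_on (UNIV \<times> UNIV)" by (rule abs_summable_summable)
  define S where "S = infsum F (UNIV \<times> UNIV)"
  have FS: "(F has_sum S) (UNIV \<times> UNIV)" using Fs by (simp add: S_def)
  have inner1: "((\<lambda>k. F (n, k)) has_sum (\<Sum>k. f n k)) UNIV" for n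
    unfolding F_def by (simp add: norm_summable_imp_has_sum[OF s1 summable_sums[OF summable_norm_cancel[OF s1]]])
  have "((\<lambda>n. \<Sum>k. f n k) has_sum S) UNIV"
    by (rule has_sum_Sigma'[OF FS]) (use inner1 in auto)
  then have a: "(\<lambda>n. \<Sum>k. f n k) sums S" by (rule has_sum_imp_sums)
  have FS': "((\<lambda>(k, n). F (n, k)) has_sum S) (UNIV \<times> UNIV)"
    using FS has_sum_swap by blast
  have sk: "summable (\<lambda>n. norm (f n k))" for k
  proof (rule summable_comparison_test'[OF s2, where N=0])
    fix n :: nat
    have "sum (\<lambda>k. norm (f n k)) {k} \<le> (\<Sum>k. norm (f n k))"
      by (rule sum_le_suminf) (use s1 in auto)
    then show "norm (norm (f n k)) \<le> (\<Sum>k. norm (f n k))" by simp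
  qed
  have inner2: "((\<lambda>n. (\<lambda>(k, n). F (n, k)) (k, n)) has_sum (\<Sum>n. f n k)) UNIV" for k
    unfolding F_def by (simp add: norm_summable_imp_has_sum[OF sk summable_sums[OF summable_norm_cancel[OF sk]]])
  have "((\<lambda>k. \<Sum>n. f n k) has_sum S) UNIV"
    by (rule has_sum_Sigma'[OF FS']) (use inner2 in auto)
  then have b: "(\<lambda>k. \<Sum>n. f n k) sums S" by (rule has_sum_imp_sums)
  have "S = (\<Sum>n. \<Sum>k. f n k)" using a by (simp add: sums_iff)
  then show "(\<lambda>k. \<Sum>n. f n k) sums (\<Sum>n. \<Sum>k. f n k)" "(\<lambda>n. \<Sum>k. f n k) sums (\<Sum>n. \<Sum>k. f n k)"
    using a b by auto
qed

lemma norm_gbinomial_le: "norm ((a::complex) gchoose k) \<le> (1 + norm a) ^ k"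
proof (induction k)
  case (Suc k)
  have e: "of_nat (Suc k) * (a gchoose Suc k) = (a - of_nat k) * (a gchoose k)"
    using gbinomial_mult_1[of a k] by (simp add: algebra_simps)
  have "real (Suc k) * norm (a gchoose Suc k) = norm (a - of_nat k) * norm (a gchoose k)"
    using arg_cong[OF e, of norm] by (simp only: norm_mult norm_of_nat)
  also have "\<dots> \<le> (norm a + k) * (1 + norm a) ^ k"
    by (intro mult_mono Suc.IH) (auto intro: order.trans[OF norm_triangle_ineq4])
  also have "\<dots> \<le> real (Suc k) * (1 + norm a) ^ Suc k"
  proof -
    have "norm a + k \<le> real (Suc k) * (1 + norm a)" by (simp add: algebra_simps)
    then have "(norm a + k) * (1 + norm a) ^ k \<le> (real (Suc k) * (1 + norm a)) * (1 + norm a) ^ k"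
      by (rule mult_right_mono) simp
    then show ?thesis by (simp only: power_Suc mult.assoc)
  qed
  finally have "real (Suc k) * norm (a gchoose Suc k) \<le> real (Suc k) * (1 + norm a) ^ Suc k" .
  then show ?case by (rule mult_left_le_imp_le) simp
qed simp


lemma expansion_identity:
  fixes a q :: real and s :: complex
  assumes q: "q > 0" and s: "Re s > 0" and aq: "\<bar>a\<bar> * (1 + norm (1 - s)) < q"
  defines "x \<equiv> (\<lambda>n::nat. real n + q)"
  defines "T \<equiv> (\<lambda>n. (-1)^n * (complex_of_real (x n + a) powr (1 - s) - complex_of_real (x n) powr (1 - s)
                  - of_real a * (1 - s) * complex_of_real (x n) powr (- s)))"
  defines "K \<equiv> (\<lambda>k. ((1 - s) gchoose (k + 2)) * of_real a ^ (k + 2) * Zc q (s + of_nat (k + 1)))"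
  shows "\<exists>V. T sums V \<and> K sums V"
proof -
  define A where "A = 1 - s"
  define f where "f = (\<lambda>n k. (-1)^n * ((A gchoose (k + 2)) * of_real a ^ (k + 2) * complex_of_real (x n) powr (A - of_nat (k + 2))))"
  have xpos: "x n \<ge> q" for n by (simp add: x_def)
  have aq': "\<bar>a\<bar> < q" using aq by (smt (verit) mult_le_cancel_left1 norm_ge_zero)
  have exp_eq: "A - of_nat (k + 2) = - (s + of_nat (k + 1))" for k
    by (simp add: A_def algebra_simps)
  have row: "(\<lambda>k. f n k) sums T n" for n
  proof -
    have "\<bar>a\<bar> < \<bar>x n\<bar>" using aq' xpos[of n] by linarith
    from gen_binomial_complex''[OF this, of A]
    have "(\<lambda>m. (A gchoose m) * of_real (x n) powr (A - of_nat m) * of_real a ^ m) sums of_real (x n + a) powr A" .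
    from sums_split_initial_segment[OF this, of 2]
    have "(\<lambda>k. (A gchoose (k + 2)) * of_real (x n) powr (A - of_nat (k + 2)) * of_real a ^ (k + 2)) sums
           (of_real (x n + a) powr A - (of_real (x n) powr A + A * of_real (x n) powr (A - 1) * of_real a))"
      by (simp add: numeral_2_eq_2)
    from sums_mult[OF this, of "(-1)^n"]
    show ?thesis unfolding f_def T_def A_def by (simp add: algebra_simps)
  qed
  have col: "(\<lambda>n. f n k) sums K k" for k
  proof -
    have "Re (s + of_nat (k + 1)) > 0" using s by simp
    from sums_mult[OF Zc_sums[OF q this], of "(A gchoose (k + 2)) * of_real a ^ (k + 2)"]
    show ?thesis unfolding f_def K_def
      by (simp add: exp_eq x_def A_def algebra_simps)
  qed
  define b where "b = (1 + norm A) * \<bar>a\<bar>"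
  define \<rho> where "\<rho> = b / q"
  define P where "P = (\<lambda>n. x n powr (- (Re s + 1)))"
  have b0: "b \<ge> 0" by (simp add: b_def)
  have \<rho>: "\<rho> \<ge> 0" "\<rho> < 1" using aq q b0 by (auto simp: \<rho>_def b_def A_def mult.commute)
  have fb: "norm (f n k) \<le> b^2 * \<rho>^k * P n" for n k
  proof -
    have "norm (f n k) = norm (A gchoose (k + 2)) * \<bar>a\<bar> ^ (k + 2) * x n powr (- (Re s + real (k + 1)))"
      unfolding f_def exp_eq using xpos[of n] q
      by (simp add: norm_mult norm_power norm_powr_real_powr)
    also have "\<dots> \<le> (1 + norm A) ^ (k + 2) * \<bar>a\<bar> ^ (k + 2) * (P n / q ^ k)"
    proof (intro mult_mono norm_gbinomial_le)
      have "x n powr (- (Re s + real (k + 1))) = P n * x n powr (- real k)"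
        unfolding P_def using xpos[of n] q by (simp flip: powr_add add: algebra_simps)
      also have "x n powr (- real k) \<le> q powr (- real k)"
        by (rule powr_mono2') (use xpos[of n] q in auto)
      also have "q powr (- real k) = 1 / q ^ k" using q by (simp add: powr_minus powr_realpow divide_inverse)
      finally show "x n powr (- (Re s + real (k + 1))) \<le> P n / q ^ k"
        unfolding P_def by (simp add: mult_left_mono)
    qed (auto simp: P_def)
    also have "\<dots> = b^2 * \<rho>^k * P n"
    proof -
      have e1: "(1 + norm A)^(k+2) * \<bar>a\<bar>^(k+2) = b^(k+2)" by (simp add: b_def power_mult_distrib)
      have e2: "b^2 * \<rho>^k = b^(k+2)/q^k" by (simp add: \<rho>_def power_divide power_add mult.commute power2_eq_square)
      show ?thesis unfolding e2 e1[symmetric] by simp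
    qed
    finally show ?thesis .
  qed
  have Ps: "summable P"
    unfolding P_def x_def by (rule summable_shift_powr) (use q s in auto)
  have gs: "summable (\<lambda>k. b^2 * \<rho>^k * P n)" for n
    by (intro summable_mult2 summable_mult summable_geometric) (use \<rho> in auto)
  have s1: "summable (\<lambda>k. norm (f n k))" for n
    by (rule summable_comparison_test'[OF gs, where N=0]) (use fb in simp)
  have s2: "summable (\<lambda>n. \<Sum>k. norm (f n k))"
  proof (rule summable_comparison_test'[where N=0])
    show "summable (\<lambda>n. b^2 * (\<Sum>k. \<rho>^k) * P n)" by (intro summable_mult Ps)
    fix n :: nat
    have "(\<Sum>k. norm (f n k)) \<le> (\<Sum>k. b^2 * \<rho>^k * P n)"
      by (rule suminf_le) (use fb s1 gs in auto)
    also have "\<dots> = b^2 * (\<Sum>k. \<rho>^k) * P n"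
      by (subst suminf_mult2[symmetric]) (auto intro!: summable_mult summable_geometric simp: \<rho> suminf_mult[symmetric])
    finally show "norm (\<Sum>k. norm (f n k)) \<le> b^2 * (\<Sum>k. \<rho>^k) * P n"
      by (simp add: suminf_nonneg s1)
  qed
  have sw1: "(\<lambda>k. \<Sum>n. f n k) sums (\<Sum>n. \<Sum>k. f n k)" and sw2: "(\<lambda>n. \<Sum>k. f n k) sums (\<Sum>n. \<Sum>k. f n k)"
    using double_sums_swap[OF s1 s2] by auto
  have "(\<lambda>n. \<Sum>k. f n k) = T" using row by (auto simp: sums_iff)
  moreover have "(\<lambda>k. \<Sum>n. f n k) = K" using col by (auto simp: sums_iff)
  ultimately show ?thesis using sw1 sw2 by auto
qed


lemma higher_deriv_sum_UNIV:
  fixes f :: "'i \<Rightarrow> complex \<Rightarrow> complex"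
  assumes "finite I" "\<And>i. i \<in> I \<Longrightarrow> f i holomorphic_on UNIV"
  shows "(deriv ^^ j) (\<lambda>w. \<Sum>i\<in>I. f i w) z = (\<Sum>i\<in>I. (deriv ^^ j) (f i) z)"
  using assms
proof (induction I rule: finite_induct)
  case empty
  then show ?case by simp
next
  case (insert x F)
  have h1: "f x holomorphic_on UNIV" using insert by auto
  have h2: "(\<lambda>w. \<Sum>i\<in>F. f i w) holomorphic_on UNIV"
    using insert by (intro holomorphic_on_sum) auto
  have "(deriv ^^ j) (\<lambda>w. \<Sum>i\<in>insert x F. f i w) z = (deriv ^^ j) (\<lambda>w. f x w + (\<Sum>i\<in>F. f i w)) z"
    using insert by simp
  also have "\<dots> = (deriv ^^ j) (f x) z + (deriv ^^ j) (\<lambda>w. \<Sum>i\<in>F. f i w) z"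
    by (rule higher_deriv_add[OF h1 h2]) auto
  finally show ?case using insert by simp
qed

lemma hd_pow1: "(deriv ^^ j) (\<lambda>s. (s - 1) ^ n) (1::complex) = (if j = n then fact n else 0)"
proof -
  have "(deriv ^^ j) (\<lambda>s. (s - 1) ^ n) (1::complex) = pochhammer (of_nat (Suc n - j)) j * (1 - 1) ^ (n - j)"
    by (rule higher_deriv_power)
  also have "\<dots> = (if j = n then fact n else 0)"
  proof (cases "j \<le> n")
    case True
    then show ?thesis by (cases "j = n") (auto simp: pochhammer_fact)
  next
    case False
    then have "Suc n - j = 0" by simp
    moreover have "pochhammer (0::complex) j = 0" using False by (simp add: pochhammer_0_left)
    ultimately show ?thesis using False by simp
  qed
  finally show ?thesis .
qed

lemma hd_poly:
  "(deriv ^^ j) (\<lambda>s. \<Sum>i\<le>m. b i * (s - 1) ^ i) (1::complex) = (if j \<le> m then fact j * b j else 0)"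
proof -
  have "(deriv ^^ j) (\<lambda>s. \<Sum>i\<le>m. b i * (s - 1) ^ i) (1::complex) = (\<Sum>i\<le>m. (deriv ^^ j) (\<lambda>s. b i * (s - 1) ^ i) 1)"
    by (rule higher_deriv_sum_UNIV) (auto intro!: holomorphic_intros)
  also have "\<dots> = (\<Sum>i\<le>m. b i * (deriv ^^ j) (\<lambda>s. (s - 1) ^ i) 1)"
    by (intro sum.cong refl higher_deriv_cmult[of _ UNIV]) (auto intro!: holomorphic_intros)
  also have "\<dots> = (\<Sum>i\<le>m. if i = j then b j * fact j else 0)"
    by (intro sum.cong refl) (auto simp: hd_pow1)
  also have "\<dots> = (if j \<le> m then fact j * b j else 0)"
    by (simp add: sum.delta' mult.commute)
  finally show ?thesis .
qed

lemma hd_one_minus: "(deriv ^^ j) (\<lambda>s. 1 - s) (z::complex) = (if j = 0 then 1 - z else if j = 1 then -1 else 0)"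
proof -
  have "(deriv ^^ j) (\<lambda>s::complex. 1 - s) = (\<lambda>z. if j = 0 then 1 - z else if j = 1 then -1 else 0)"
  proof (induction j)
    case (Suc j)
    show ?case
    proof (cases "j = 0")
      case True
      have "deriv (\<lambda>s::complex. 1 - s) z = -1" for z
        by (rule DERIV_imp_deriv) (auto intro!: derivative_eq_intros)
      then show ?thesis using True by (auto simp: fun_eq_iff)
    next
      case False
      have e: "(deriv ^^ j) (\<lambda>s::complex. 1 - s) = (\<lambda>z. if j = 1 then -1 else 0)" using Suc False by simp
      show ?thesis using False by (simp add: e fun_eq_iff)
    qed
  qed simp
  then show ?thesis by simp
qed

lemma hd_mult_one_minus:
  assumes "Z holomorphic_on UNIV"
  shows "(deriv ^^ Suc l) (\<lambda>s. (1 - s) * Z s) 1 = - of_nat (Suc l) * (deriv ^^ l) Z 1"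
proof -
  have "(deriv ^^ Suc l) (\<lambda>s. (1 - s) * Z s) 1 =
     (\<Sum>i = 0..Suc l. of_nat (Suc l choose i) * (deriv ^^ i) (\<lambda>s. 1 - s) 1 * (deriv ^^ (Suc l - i)) Z 1)"
    by (rule higher_deriv_mult[of _ UNIV]) (auto intro!: holomorphic_intros assms)
  also have "\<dots> = (\<Sum>i = 0..Suc l. if i = 1 then - of_nat (Suc l) * (deriv ^^ l) Z 1 else 0)"
    by (intro sum.cong refl) (auto simp: hd_one_minus)
  also have "\<dots> = - of_nat (Suc l) * (deriv ^^ l) Z 1" by simp
  finally show ?thesis .
qed

lemma hd_powr_exp:
  assumes "\<alpha> > 0"
  shows "(deriv ^^ j) (\<lambda>s. complex_of_real \<alpha> powr (1 - s)) 1 = (- of_real (ln \<alpha>)) ^ j"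
proof -
  define L where "L = Ln (complex_of_real \<alpha>)"
  have L: "L = of_real (ln \<alpha>)" using Ln_of_real[OF assms] by (simp add: L_def)
  have nz: "complex_of_real \<alpha> \<noteq> 0" using assms by simp
  have "(deriv ^^ j) (\<lambda>s. complex_of_real \<alpha> powr (1 - s)) = (\<lambda>s. (- L) ^ j * complex_of_real \<alpha> powr (1 - s))"
  proof (induction j)
    case (Suc j)
    have dz: "deriv (\<lambda>s. (- L) ^ j * complex_of_real \<alpha> powr (1 - s)) z = (- L) ^ Suc j * complex_of_real \<alpha> powr (1 - z)" for z
    proof (rule DERIV_imp_deriv)
      have "((\<lambda>s. complex_of_real \<alpha> powr s) has_field_derivative L * complex_of_real \<alpha> powr (1 - z)) (at (1 - z))"
        unfolding L_def by (rule has_field_derivative_powr_right[OF nz])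
      moreover have d1: "((\<lambda>s. 1 - s) has_field_derivative -1) (at z)"
        by (auto intro!: derivative_eq_intros)
      ultimately have "((\<lambda>s. complex_of_real \<alpha> powr (1 - s)) has_field_derivative L * complex_of_real \<alpha> powr (1 - z) * (-1)) (at z)"
        by (rule DERIV_chain2[where f="\<lambda>s. complex_of_real \<alpha> powr s" and g="\<lambda>s. 1 - s"])
      from DERIV_cmult[OF this, of "(-L)^j"]
      show "((\<lambda>s. (- L) ^ j * complex_of_real \<alpha> powr (1 - s)) has_field_derivative (- L) ^ Suc j * complex_of_real \<alpha> powr (1 - z)) (at z)"
        by (simp add: algebra_simps)
    qed
    show ?case unfolding funpow.simps o_apply Suc.IH by (rule ext) (rule dz)
  qed simp
  then show ?thesis using nz by (simp add: L)
qed

lemma hd_shift: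
  assumes "Z holomorphic_on UNIV"
  shows "(deriv ^^ j) (\<lambda>s. Z (s + c)) z = (deriv ^^ j) Z (z + c)"
  using higher_deriv_compose_linear'[OF assms, of UNIV z 1 c j] by simp

lemma hd_term:
  assumes "Z holomorphic_on UNIV"
  shows "(deriv ^^ n) (\<lambda>s. (\<Sum>i\<le>m. b i * (s - 1) ^ i) * Z (s + c)) 1 =
     (\<Sum>i = 0..n. of_nat (n choose i) * (if i \<le> m then fact i * b i else 0) * (deriv ^^ (n - i)) Z (1 + c))"
proof -
  have hz: "(\<lambda>s. Z (s + c)) holomorphic_on UNIV"
    by (rule holomorphic_on_compose_gen[of _ UNIV _ UNIV, unfolded o_def]) (auto intro!: holomorphic_intros assms)
  have "(deriv ^^ n) (\<lambda>s. (\<Sum>i\<le>m. b i * (s - 1) ^ i) * Z (s + c)) 1 =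
     (\<Sum>i = 0..n. of_nat (n choose i) * (deriv ^^ i) (\<lambda>s. \<Sum>i\<le>m. b i * (s - 1) ^ i) 1 * (deriv ^^ (n - i)) (\<lambda>s. Z (s + c)) 1)"
    by (rule higher_deriv_mult[of _ UNIV]) (auto intro!: holomorphic_intros hz)
  then show ?thesis by (simp add: hd_poly hd_shift[OF assms])
qed


definition Rp :: "nat \<Rightarrow> complex \<Rightarrow> complex" where
  "Rp m s = (-1)^m / fact m * (\<Sum>i\<le>m. of_nat (stirling m i) * (s - 1)^i)"

lemma gchoose_Rp: "(1 - s) gchoose m = Rp m s"
proof -
  have "(1 - s) gchoose m = (-1)^m * pochhammer (s - 1) m / fact m"
    using gbinomial_pochhammer[of "1 - s" m] by simp
  also have "pochhammer (s - 1) m = (\<Sum>i\<le>m. of_nat (stirling m i) * (s - 1)^i)"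
    by (simp add: stirling_pochhammer)
  finally show ?thesis by (simp add: Rp_def)
qed

lemma Rp_holo: "Rp m holomorphic_on UNIV"
  unfolding Rp_def[abs_def] by (intro holomorphic_intros)

lemma norm_Rp: "norm (Rp m s) \<le> (1 + norm (1 - s)) ^ m"
  using norm_gbinomial_le[of "1 - s" m] by (simp add: gchoose_Rp)

definition gg :: "real \<Rightarrow> (nat \<Rightarrow> complex) \<Rightarrow> nat \<Rightarrow> complex \<Rightarrow> complex" where
  "gg q c k s = c k * (Rp (k + 2) s * Zc q (s + of_nat (k + 1)))"

lemma Zc_shift_holo: "q > 0 \<Longrightarrow> (\<lambda>s. Zc q (s + c)) holomorphic_on UNIV"
  by (rule holomorphic_on_compose_gen[of _ UNIV _ UNIV, unfolded o_def])
     (auto intro!: holomorphic_intros Zc_holo)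

lemma gg_holo: "q > 0 \<Longrightarrow> gg q c k holomorphic_on UNIV"
  unfolding gg_def[abs_def] by (intro holomorphic_intros Rp_holo Zc_shift_holo)

lemma Zc_bound:
  assumes q: "q \<ge> 1" and s: "Re s \<ge> \<sigma>" "\<sigma> > 0"
  shows "norm (Zc q (s + of_nat (k + 1))) \<le> (\<Sum>n. (real n + q) powr (- (\<sigma> + 1))) / q ^ k"
proof -
  define w where "w = s + of_nat (k + 1)"
  have Rew: "Re w > 0" using s by (simp add: w_def)
  define f where "f = (\<lambda>n. (-1)^n * complex_of_real (real n + q) powr (- w))"
  have sums: "f sums Zc q w" unfolding f_def by (rule Zc_sums) (use q Rew in auto)
  have nf: "norm (f n) = (real n + q) powr (- (Re s + 1)) * (real n + q) powr (- real k)" for n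
  proof -
    have "norm (f n) = (real n + q) powr (- Re w)"
      unfolding f_def using q by (simp add: norm_mult norm_power norm_powr_real_powr)
    also have "\<dots> = (real n + q) powr (- (Re s + 1)) * (real n + q) powr (- real k)"
    proof -
      have "- Re w = - (Re s + 1) + - real k" by (simp add: w_def)
      then show ?thesis by (simp only: powr_add)
    qed
    finally show ?thesis .
  qed
  have bnd: "norm (f n) \<le> (real n + q) powr (- (\<sigma> + 1)) / q ^ k" for n
  proof -
    have "(real n + q) powr (- (Re s + 1)) \<le> (real n + q) powr (- (\<sigma> + 1))"
      by (rule powr_mono) (use s q in auto)
    moreover have "(real n + q) powr (- real k) \<le> q powr (- real k)"
      by (rule powr_mono2') (use q in auto)
    moreover have "q powr (- real k) = 1 / q ^ k" using q by (simp add: powr_minus powr_realpow divide_inverse)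
    ultimately have "norm (f n) \<le> (real n + q) powr (- (\<sigma> + 1)) * (1 / q ^ k)"
      unfolding nf by (intro mult_mono) auto
    then show ?thesis by simp
  qed
  have sb: "summable (\<lambda>n. (real n + q) powr (- (\<sigma> + 1)) / q ^ k)"
    by (intro summable_divide summable_shift_powr) (use q s in auto)
  have sn: "summable (\<lambda>n. norm (f n))"
    by (rule summable_comparison_test'[OF sb, where N=0]) (use bnd in auto)
  have "norm (Zc q w) = norm (suminf f)" using sums by (simp add: sums_iff)
  also have "\<dots> \<le> (\<Sum>n. norm (f n))" by (rule summable_norm[OF sn])
  also have "\<dots> \<le> (\<Sum>n. (real n + q) powr (- (\<sigma> + 1)) / q ^ k)"
    by (rule suminf_le[OF bnd sn sb])
  also have "\<dots> = (\<Sum>n. (real n + q) powr (- (\<sigma> + 1))) / q ^ k"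
    by (rule suminf_divide) (intro summable_shift_powr, use q s in auto)
  finally show ?thesis by (simp add: w_def)
qed

lemma series_deriv:
  assumes q: "q > 1" and r: "0 < r" "r \<le> 1/2" and c: "\<And>k. norm (c k) \<le> C * a0 ^ k"
    and a0: "a0 \<ge> 0" "(1 + r) * a0 < q"
  shows "(\<lambda>k. (deriv ^^ j) (gg q c k) 1) sums (deriv ^^ j) (\<lambda>s. \<Sum>k. gg q c k s) 1"
proof -
  define M where "M = (\<Sum>n. (real n + q) powr (- (1/2 + 1)))"
  define \<rho> where "\<rho> = (1 + r) * a0 / q"
  have \<rho>: "\<rho> \<ge> 0" "\<rho> < 1" using q r a0 by (auto simp: \<rho>_def)
  have M0: "M \<ge> 0" unfolding M_def
    by (intro suminf_nonneg summable_shift_powr) (use q in auto)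
  have C0: "C \<ge> 0" using c[of 0] by (metis norm_ge_zero order_trans power_0 mult.right_neutral)
  have bnd: "norm (gg q c k s) \<le> C * (1 + r)^2 * M * \<rho>^k" if "s \<in> ball 1 r" for k s
  proof -
    have ns: "norm (1 - s) \<le> r" using that by (simp add: dist_norm)
    have Res: "Re s \<ge> 1/2"
      using that r abs_Re_le_cmod[of "1 - s"] by (auto simp: dist_norm)
    have "norm (gg q c k s) = norm (c k) * norm (Rp (k+2) s) * norm (Zc q (s + of_nat (k + 1)))"
      by (simp add: gg_def norm_mult)
    also have "\<dots> \<le> (C * a0 ^ k) * (1 + r) ^ (k + 2) * (M / q ^ k)"
    proof (intro mult_mono c)
      show "norm (Rp (k+2) s) \<le> (1 + r) ^ (k + 2)"
        using norm_Rp[of "k+2" s] power_mono[of "1 + norm (1 - s)" "1 + r" "k+2"] ns by auto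
      show "norm (Zc q (s + of_nat (k + 1))) \<le> M / q ^ k"
        unfolding M_def by (rule Zc_bound) (use q Res in auto)
    qed (use C0 a0 r in auto)
    also have "\<dots> = C * (1 + r)^2 * M * \<rho>^k"
    proof -
      have e1: "a0 ^ k * (1 + r) ^ (k + 2) = (1 + r)^2 * ((1 + r) * a0) ^ k"
        by (simp add: power_mult_distrib power_add power2_eq_square)
      have e2: "\<rho>^k = ((1 + r) * a0) ^ k / q ^ k" by (simp add: \<rho>_def power_divide)
      show ?thesis unfolding e2 using e1 by (simp add: field_simps)
    qed
    finally show ?thesis .
  qed
  have ul: "uniform_limit (ball 1 r) (\<lambda>N s. \<Sum>k<N. gg q c k s) (\<lambda>s. \<Sum>k. gg q c k s) sequentially"
    by (rule Weierstrass_m_test[OF bnd]) (use \<rho> in \<open>auto intro!: summable_mult summable_geometric\<close>)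
  have "(\<lambda>N. (deriv ^^ j) (\<lambda>s. \<Sum>k<N. gg q c k s) 1) \<longlonglongrightarrow> (deriv ^^ j) (\<lambda>s. \<Sum>k. gg q c k s) 1"
    by (rule higher_deriv_complex_uniform_limit[OF ul])
       (use q r in \<open>auto intro!: always_eventually holomorphic_intros holomorphic_on_subset[OF gg_holo]\<close>)
  moreover have "(deriv ^^ j) (\<lambda>s. \<Sum>k<N. gg q c k s) 1 = (\<Sum>k<N. (deriv ^^ j) (gg q c k) 1)" for N
    by (rule higher_deriv_sum_UNIV) (use q gg_holo in auto)
  ultimately show ?thesis unfolding sums_def by simp
qed


lemma sum_rev_shift:
  fixes h :: "nat \<Rightarrow> complex"
  assumes "h 0 = 0"
  shows "(\<Sum>i=0..Suc l. h i) = (\<Sum>j\<le>l. h (Suc (l - j)))"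
proof -
  have "(\<Sum>i=0..Suc l. h i) = h 0 + (\<Sum>i=Suc 0..Suc l. h i)"
    by (rule sum.atLeast_Suc_atMost) simp
  also have "(\<Sum>i=Suc 0..Suc l. h i) = (\<Sum>i=0..l. h (Suc i))"
    by (rule sum.shift_bounds_cl_Suc_ivl)
  also have "\<dots> = (\<Sum>i=0..l. h (Suc (l + 0 - i)))"
    by (rule sum.atLeastAtMost_rev)
  finally show ?thesis using assms by (simp add: atLeast0AtMost)
qed

lemma gg_deriv:
  assumes q: "q > 0"
  shows "(deriv ^^ Suc l) (gg q c k) 1 = c k * (-1)^(k+2) / fact (k+2) * fact (Suc l) *
     (\<Sum>j\<le>l. of_nat (stirling (k+2) (l - j + 1)) / fact j * (deriv ^^ j) (Zc q) (of_nat (k+2)))"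
proof -
  define m where "m = k + 2"
  define P where "P = (\<lambda>s::complex. \<Sum>i\<le>m. of_nat (stirling m i) * (s - 1)^i)"
  define Z where "Z = Zc q"
  have ZH: "Z holomorphic_on UNIV" unfolding Z_def by (rule Zc_holo[OF q])
  have Zs: "(\<lambda>s. Z (s + of_nat (k+1))) holomorphic_on UNIV" unfolding Z_def by (rule Zc_shift_holo[OF q])
  have PH: "P holomorphic_on UNIV" unfolding P_def[abs_def] by (intro holomorphic_intros)
  have PZ: "(\<lambda>s. P s * Z (s + of_nat (k+1))) holomorphic_on UNIV"
    by (rule holomorphic_on_mult[OF PH Zs])
  have g: "gg q c k = (\<lambda>s. c k * ((-1)^m / fact m * (P s * Z (s + of_nat (k+1)))))"
    by (auto simp: gg_def Rp_def P_def Z_def m_def fun_eq_iff)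
  have "(deriv ^^ Suc l) (gg q c k) 1 = c k * ((deriv ^^ Suc l) (\<lambda>s. (-1)^m / fact m * (P s * Z (s + of_nat (k+1)))) 1)"
    unfolding g by (rule higher_deriv_cmult[of _ UNIV, OF holomorphic_on_mult[OF holomorphic_on_const PZ]]) auto
  also have "(deriv ^^ Suc l) (\<lambda>s. (-1)^m / fact m * (P s * Z (s + of_nat (k+1)))) 1 =
      (-1)^m / fact m * (deriv ^^ Suc l) (\<lambda>s. P s * Z (s + of_nat (k+1))) 1"
    by (rule higher_deriv_cmult[of _ UNIV, OF PZ]) auto
  also have "(deriv ^^ Suc l) (\<lambda>s. P s * Z (s + of_nat (k+1))) 1 =
     (\<Sum>i = 0..Suc l. of_nat (Suc l choose i) * (if i \<le> m then fact i * of_nat (stirling m i) else 0) * (deriv ^^ (Suc l - i)) Z (1 + of_nat (k+1)))"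
    unfolding P_def by (rule hd_term[OF ZH])
  also have "\<dots> = (\<Sum>j\<le>l. of_nat (Suc l choose Suc (l - j)) * (if Suc (l - j) \<le> m then fact (Suc (l - j)) * of_nat (stirling m (Suc (l - j))) else 0) * (deriv ^^ (Suc l - Suc (l - j))) Z (1 + of_nat (k+1)))"
    by (rule sum_rev_shift) (simp add: m_def)
  also have "\<dots> = (\<Sum>j\<le>l. fact (Suc l) * (of_nat (stirling m (l - j + 1)) / fact j * (deriv ^^ j) Z (of_nat m)))"
  proof (rule sum.cong[OF refl])
    fix j assume j: "j \<in> {..l}"
    have st: "(if Suc (l - j) \<le> m then fact (Suc (l - j)) * of_nat (stirling m (Suc (l - j))) else 0) =
        (fact (Suc (l - j)) * of_nat (stirling m (Suc (l - j))) :: complex)"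
      by auto
    have e1: "Suc l - Suc (l - j) = j" using j by auto
    have b0: "(of_nat (Suc l choose Suc (l - j)) :: complex) = fact (Suc l) / (fact (Suc (l - j)) * fact (Suc l - Suc (l - j)))"
      by (rule binomial_fact) (use j in auto)
    have bin: "(of_nat (Suc l choose Suc (l - j)) :: complex) * fact (Suc (l - j)) = fact (Suc l) / fact j"
      unfolding b0 e1 by (simp del: fact_Suc)
    have e2: "1 + of_nat (k + 1) = (of_nat m :: complex)" by (simp add: m_def)
    show "of_nat (Suc l choose Suc (l - j)) * (if Suc (l - j) \<le> m then fact (Suc (l - j)) * of_nat (stirling m (Suc (l - j))) else 0) * (deriv ^^ (Suc l - Suc (l - j))) Z (1 + of_nat (k+1))
        = fact (Suc l) * (of_nat (stirling m (l - j + 1)) / fact j * (deriv ^^ j) Z (of_nat m))"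
      unfolding st e1 e2 using bin by (simp add: field_simps del: binomial_Suc_Suc fact_Suc)
  qed
  also have "\<dots> = fact (Suc l) * (\<Sum>j\<le>l. of_nat (stirling m (l - j + 1)) / fact j * (deriv ^^ j) Z (of_nat m))"
    by (simp add: sum_distrib_left)
  finally show ?thesis by (simp add: m_def Z_def mult_ac)
qed


lemma alg1:
  fixes n u X a b :: complex
  assumes "n \<noteq> 0" "u * u = 1"
  shows "u / (2 * n) * (2 * (- n * X) - ((- u * a) - (- u * b))) = - u * X + (a - b) / (2 * n)"
proof -
  have "u / (2 * n) * (2 * (- n * X) - ((- u * a) - (- u * b))) = - u * X + (u * u) * (a - b) / (2 * n)"
    using assms(1) by (simp add: field_simps)
  then show ?thesis using assms(2) by simp
qed

lemma generic_final:
  fixes c :: "nat \<Rightarrow> complex" and l :: nat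
  assumes q: "q > 1" and r: "0 < r" "r \<le> 1/2" and c: "\<And>k. norm (c k) \<le> C * a0^k"
    and a0: "a0 \<ge> 0" "(1 + r) * a0 < q" and \<alpha>: "\<alpha> > 0" "\<beta> > 0"
    and ident: "\<And>s. s \<in> ball 1 r \<Longrightarrow> (\<Sum>k. gg q c k s) =
        2 * ((1 - s) * Zc q s) - (complex_of_real \<alpha> powr (1 - s) - complex_of_real \<beta> powr (1 - s))"
  defines "\<kappa> \<equiv> (-1)^l / (2 * fact (Suc l)) :: complex"
  shows "(\<lambda>k. \<kappa> * (deriv ^^ Suc l) (gg q c k) 1) sums (\<kappa> * (deriv ^^ Suc l) (\<lambda>s. \<Sum>k. gg q c k s) 1)"
    and "(-1)^l * (deriv ^^ l) (Zc q) 1 = complex_of_real ((ln \<alpha> ^ (l + 1) - ln \<beta> ^ (l + 1)) / (2 * (real l + 1)))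
            - fact l * (\<kappa> * (deriv ^^ Suc l) (\<lambda>s. \<Sum>k. gg q c k s) 1)"
proof -
  show "(\<lambda>k. \<kappa> * (deriv ^^ Suc l) (gg q c k) 1) sums (\<kappa> * (deriv ^^ Suc l) (\<lambda>s. \<Sum>k. gg q c k s) 1)"
    by (rule sums_mult, rule series_deriv[OF q r c a0])
  define Z where "Z = Zc q"
  have ZH: "Z holomorphic_on UNIV" using Zc_holo q by (simp add: Z_def)
  define H where "H = (\<lambda>s. 2 * ((1 - s) * Z s) - (complex_of_real \<alpha> powr (1 - s) - complex_of_real \<beta> powr (1 - s)))"
  have HH: "H holomorphic_on UNIV" unfolding H_def by (intro holomorphic_intros ZH)
  have GH: "(\<lambda>s. \<Sum>k. gg q c k s) holomorphic_on ball 1 r"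
    by (rule holomorphic_transform[OF holomorphic_on_subset[OF HH]]) (use ident in \<open>auto simp: H_def Z_def\<close>)
  have "(deriv ^^ Suc l) (\<lambda>s. \<Sum>k. gg q c k s) 1 = (deriv ^^ Suc l) H 1"
    by (rule higher_deriv_transform_within_open[OF GH holomorphic_on_subset[OF HH]])
       (use ident r in \<open>auto simp: H_def Z_def\<close>)
  also have "\<dots> = (deriv ^^ Suc l) (\<lambda>s. 2 * ((1 - s) * Z s)) 1 -
      (deriv ^^ Suc l) (\<lambda>s. complex_of_real \<alpha> powr (1 - s) - complex_of_real \<beta> powr (1 - s)) 1"
    unfolding H_def by (rule higher_deriv_diff[of _ UNIV]) (auto intro!: holomorphic_intros ZH)
  also have "(deriv ^^ Suc l) (\<lambda>s. 2 * ((1 - s) * Z s)) 1 = 2 * (deriv ^^ Suc l) (\<lambda>s. (1 - s) * Z s) 1"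
    by (rule higher_deriv_cmult[of _ UNIV]) (auto intro!: holomorphic_intros ZH)
  also have "(deriv ^^ Suc l) (\<lambda>s. (1 - s) * Z s) 1 = - of_nat (Suc l) * (deriv ^^ l) Z 1"
    by (rule hd_mult_one_minus[OF ZH])
  also have "(deriv ^^ Suc l) (\<lambda>s. complex_of_real \<alpha> powr (1 - s) - complex_of_real \<beta> powr (1 - s)) 1 =
      (deriv ^^ Suc l) (\<lambda>s. complex_of_real \<alpha> powr (1 - s)) 1 - (deriv ^^ Suc l) (\<lambda>s. complex_of_real \<beta> powr (1 - s)) 1"
    by (rule higher_deriv_diff[of _ UNIV]) (auto intro!: holomorphic_intros)
  also have "\<dots> = (- of_real (ln \<alpha>)) ^ Suc l - (- of_real (ln \<beta>)) ^ Suc l"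
    by (simp only: hd_powr_exp[OF \<alpha>(1)] hd_powr_exp[OF \<alpha>(2)])
  finally have D: "(deriv ^^ Suc l) (\<lambda>s. \<Sum>k. gg q c k s) 1 =
     2 * (- of_nat (Suc l) * (deriv ^^ l) Z 1) - ((- of_real (ln \<alpha>)) ^ Suc l - (- of_real (ln \<beta>)) ^ Suc l)" .
  define u where "u = (-1::complex)^l"
  have uu: "u * u = 1" unfolding u_def power_mult_distrib[symmetric] by simp
  have pa: "(- of_real x) ^ Suc l = - u * of_real x ^ Suc l" for x :: real
  proof -
    have "(- of_real x)^Suc l = (-1)^Suc l * (of_real x::complex)^Suc l" by (rule power_minus)
    then show ?thesis by (simp add: u_def)
  qed
  have n0: "(of_nat (Suc l)::complex) \<noteq> 0" by (simp del: of_nat_Suc)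
  have fk: "fact l * \<kappa> = u / (2 * of_nat (Suc l))"
    by (simp add: \<kappa>_def u_def del: of_nat_Suc)
  define X where "X = (deriv ^^ l) Z 1"
  define a where "a = complex_of_real (ln \<alpha>) ^ Suc l"
  define b where "b = complex_of_real (ln \<beta>) ^ Suc l"
  define n where "n = (of_nat (Suc l)::complex)"
  have D': "(deriv ^^ Suc l) (\<lambda>s. \<Sum>k. gg q c k s) 1 = 2 * (- n * X) - ((- u * a) - (- u * b))"
    unfolding D pa X_def a_def b_def n_def ..
  have B: "u / (2 * n) * (2 * (- n * X) - ((- u * a) - (- u * b))) = - u * X + (a - b) / (2 * n)"
    using alg1[OF n0[folded n_def] uu] .
  have C: "complex_of_real ((ln \<alpha> ^ (l + 1) - ln \<beta> ^ (l + 1)) / (2 * (real l + 1))) = (a - b) / (2 * n)"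
    by (simp add: a_def b_def n_def add.commute)
  have "fact l * (\<kappa> * (deriv ^^ Suc l) (\<lambda>s. \<Sum>k. gg q c k s) 1) = (fact l * \<kappa>) * (deriv ^^ Suc l) (\<lambda>s. \<Sum>k. gg q c k s) 1"
    by (simp only: mult.assoc)
  also have "\<dots> = u / (2 * n) * (2 * (- n * X) - ((- u * a) - (- u * b)))"
    unfolding fk D' n_def ..
  also have "\<dots> = - u * X + (a - b) / (2 * n)" by (rule B)
  finally have "fact l * (\<kappa> * (deriv ^^ Suc l) (\<lambda>s. \<Sum>k. gg q c k s) 1) = - u * X + (a - b) / (2 * n)" .
  then show "(-1)^l * (deriv ^^ l) (Zc q) 1 = complex_of_real ((ln \<alpha> ^ (l + 1) - ln \<beta> ^ (l + 1)) / (2 * (real l + 1)))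
            - fact l * (\<kappa> * (deriv ^^ Suc l) (\<lambda>s. \<Sum>k. gg q c k s) 1)"
    unfolding C by (simp add: u_def X_def Z_def)
qed


lemma tele_partial:
  fixes u :: "nat \<Rightarrow> complex"
  shows "(\<Sum>n<N. (-1)^n * (u n - u (n + 2))) = u 0 - u 1 + (-1)^N * (u (Suc N) - u N)"
  by (induction N) (simp_all add: algebra_simps)

lemma tele_sums:
  fixes u :: "nat \<Rightarrow> complex"
  assumes "(\<lambda>N. u (Suc N) - u N) \<longlonglongrightarrow> 0"
  shows "(\<lambda>n. (-1)^n * (u n - u (n + 2))) sums (u 0 - u 1)"
proof -
  have z: "(\<lambda>N. (-1)^N * (u (Suc N) - u N)) \<longlonglongrightarrow> 0"
    by (rule tendsto_norm_zero_cancel) (use tendsto_norm_zero[OF assms] in \<open>simp add: norm_mult norm_power\<close>)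
  have "(\<lambda>N. u 0 - u 1 + (-1)^N * (u (Suc N) - u N)) \<longlonglongrightarrow> u 0 - u 1 + 0"
    by (intro tendsto_intros z)
  then show ?thesis unfolding sums_def tele_partial by simp
qed

lemma powr_diff_tendsto:
  assumes c: "c > 0" and w: "Re w < 1"
  shows "(\<lambda>N. complex_of_real (real (Suc N) + c) powr w - complex_of_real (real N + c) powr w) \<longlonglongrightarrow> 0"
proof (rule Lim_null_comparison)
  show "\<forall>\<^sub>F N in sequentially. norm (complex_of_real (real (Suc N) + c) powr w - complex_of_real (real N + c) powr w)
           \<le> norm w * (real N + c) powr (Re w - 1)"
  proof (intro always_eventually allI)
    fix N :: nat
    define y where "y = real N + c"
    have y: "y > 0" using c by (simp add: y_def)
    define S where "S = closed_segment (complex_of_real y) (of_real y + 1)"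
    have inS: "\<exists>t. 0 \<le> t \<and> t \<le> 1 \<and> z = of_real (y + t)" if "z \<in> S" for z
      using that by (auto simp: S_def in_segment scaleR_conv_of_real algebra_simps)
    have der: "((\<lambda>z. z powr w) has_field_derivative w * z powr (w - 1)) (at z within S)" if zS: "z \<in> S" for z
    proof -
      obtain t where t: "0 \<le> t" "t \<le> 1" "z = of_real (y + t)" using inS[OF zS] by blast
      have "z \<notin> \<real>\<^sub>\<le>\<^sub>0" using t y by (auto simp: complex_nonpos_Reals_iff)
      then show ?thesis by (rule has_field_derivative_at_within[OF has_field_derivative_powr])
    qed
    have bnd: "norm (w * z powr (w - 1)) \<le> norm w * y powr (Re w - 1)" if zS: "z \<in> S" for z
    proof -
      obtain t where t: "0 \<le> t" "t \<le> 1" "z = of_real (y + t)" using inS[OF zS] by blast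
      have "norm (w * z powr (w - 1)) = norm w * (y + t) powr (Re w - 1)"
        using t y by (simp add: norm_mult norm_powr_real_powr)
      also have "\<dots> \<le> norm w * y powr (Re w - 1)"
        by (intro mult_left_mono powr_mono2') (use t y w in auto)
      finally show ?thesis .
    qed
    have "norm ((of_real y + 1) powr w - complex_of_real y powr w) \<le> norm w * y powr (Re w - 1) * norm ((of_real y + 1) - complex_of_real y)"
      by (rule field_differentiable_bound[OF _ der bnd]) (auto simp: S_def)
    then have bd: "norm ((of_real y + 1) powr w - complex_of_real y powr w) \<le> norm w * y powr (Re w - 1)" by (simp only: add_diff_cancel_left' norm_one mult_1_right)
    have e1: "complex_of_real (real (Suc N) + c) = of_real y + 1" by (simp add: y_def)
    have e2: "complex_of_real (real N + c) = of_real y" by (simp add: y_def)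
    show "norm (complex_of_real (real (Suc N) + c) powr w - complex_of_real (real N + c) powr w)
           \<le> norm w * (real N + c) powr (Re w - 1)" unfolding e1 e2 y_def[symmetric] by (rule bd)
  qed
  have "(\<lambda>N. (real N + c) powr (Re w - 1)) \<longlonglongrightarrow> 0"
  proof (rule tendsto_neg_powr)
    show "filterlim (\<lambda>n. real n + c) at_top sequentially"
      using filterlim_tendsto_add_at_top[OF tendsto_const[of c] filterlim_real_sequentially]
      by (simp add: add.commute)
  qed (use w in auto)
  from tendsto_mult_left[OF this, of "norm w"]
  show "(\<lambda>N. norm w * (real N + c) powr (Re w - 1)) \<longlonglongrightarrow> 0" by simp
qed

lemma ring1: "(m::complex) * (a - b) + 2 * A * (m * c) = m * (a - b - of_real (-2) * A * c)"
  by (simp add: algebra_simps)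

lemma ring2: "- ((m::complex) * (a - b)) - 2 * A * (m * c) = m * (b - d - of_real 1 * A * c) - m * (a - d - of_real (-1) * A * c)"
  by (simp add: algebra_simps)

lemma ring3: "- ((G::complex) * 1 * Z - G * (-1)^k * Z) = - (1 - (-1)^k) * (G * Z)"
  by (simp add: algebra_simps)

lemma ident1:
  assumes q: "q > 2" and s: "s \<in> ball 1 r" and r: "r \<le> 1/2" and qr: "2 * (1 + r) < q"
  shows "(\<Sum>k. gg q (\<lambda>k. (-2)^(k+2)) k s) =
     2 * ((1 - s) * Zc q s) - (complex_of_real (q - 1) powr (1 - s) - complex_of_real (q - 2) powr (1 - s))"
proof -
  define A where "A = 1 - s"
  have ns: "norm (1 - s) < r" using s by (simp add: dist_norm)
  have Res: "Re s > 0" using s r abs_Re_le_cmod[of "1 - s"] by (auto simp: dist_norm)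
  have aq: "\<bar>-2::real\<bar> * (1 + norm (1 - s)) < q" using ns qr by simp
  obtain V where TV: "(\<lambda>n. (-1)^n * (complex_of_real ((real n + q) + -2) powr (1 - s) - complex_of_real (real n + q) powr (1 - s)
                  - of_real (-2) * (1 - s) * complex_of_real (real n + q) powr (- s))) sums V"
     and KV: "(\<lambda>k. ((1 - s) gchoose (k + 2)) * of_real (-2) ^ (k + 2) * Zc q (s + of_nat (k + 1))) sums V"
    using expansion_identity[OF _ Res aq] q by auto
  have "(\<lambda>k. gg q (\<lambda>k. (-2)^(k+2)) k s) sums V"
    using KV by (simp add: gg_def gchoose_Rp mult_ac)
  then have G: "(\<Sum>k. gg q (\<lambda>k. (-2)^(k+2)) k s) = V" by (simp add: sums_iff)
  define u where "u = (\<lambda>n::nat. complex_of_real (real n + (q - 2)) powr A)"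
  have ut: "(\<lambda>N. u (Suc N) - u N) \<longlonglongrightarrow> 0"
    unfolding u_def by (rule powr_diff_tendsto) (use q Res in \<open>auto simp: A_def\<close>)
  have "(\<lambda>n. (-1)^n * (u n - u (n + 2)) + 2 * A * ((-1)^n * complex_of_real (real n + q) powr (- s))) sums
        ((u 0 - u 1) + 2 * A * Zc q s)"
    by (intro sums_add sums_mult tele_sums ut Zc_sums) (use q Res in auto)
  moreover have "(\<lambda>n. (-1)^n * (u n - u (n + 2)) + 2 * A * ((-1)^n * complex_of_real (real n + q) powr (- s))) =
     (\<lambda>n. (-1)^n * (complex_of_real ((real n + q) + -2) powr (1 - s) - complex_of_real (real n + q) powr (1 - s)
                  - of_real (-2) * (1 - s) * complex_of_real (real n + q) powr (- s)))"
  proof (rule ext)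
    fix n :: nat
    have un: "u n = complex_of_real ((real n + q) + -2) powr (1 - s)" by (simp add: u_def A_def add_diff_eq)
    have un2: "u (n + 2) = complex_of_real (real n + q) powr (1 - s)" by (simp add: u_def A_def)
    show "(-1)^n * (u n - u (n + 2)) + 2 * A * ((-1)^n * complex_of_real (real n + q) powr (- s)) =
      (-1)^n * (complex_of_real ((real n + q) + -2) powr (1 - s) - complex_of_real (real n + q) powr (1 - s)
                  - of_real (-2) * (1 - s) * complex_of_real (real n + q) powr (- s))"
      unfolding un un2 A_def by (rule ring1)
  qed
  ultimately have "V = (u 0 - u 1) + 2 * A * Zc q s" using TV sums_unique2 by auto
  moreover have "u 0 = complex_of_real (q - 2) powr (1 - s)" "u 1 = complex_of_real (q - 1) powr (1 - s)"
    by (simp_all add: u_def A_def)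
  ultimately show ?thesis using G by (simp add: A_def algebra_simps)
qed

lemma ident2:
  assumes q: "q > 1" and s: "s \<in> ball 1 r" and r: "r \<le> 1/2" and qr: "1 + r < q"
  shows "(\<Sum>k. gg q (\<lambda>k. - (1 - (-1)^k)) k s) =
     2 * ((1 - s) * Zc q s) - (complex_of_real q powr (1 - s) - complex_of_real (q - 1) powr (1 - s))"
proof -
  define A where "A = 1 - s"
  have ns: "norm (1 - s) < r" using s by (simp add: dist_norm)
  have Res: "Re s > 0" using s r abs_Re_le_cmod[of "1 - s"] by (auto simp: dist_norm)
  have aq1: "\<bar>1::real\<bar> * (1 + norm (1 - s)) < q" using ns qr by simp
  have aq2: "\<bar>-1::real\<bar> * (1 + norm (1 - s)) < q" using ns qr by simp
  obtain V1 where TV1: "(\<lambda>n. (-1)^n * (complex_of_real ((real n + q) + 1) powr (1 - s) - complex_of_real (real n + q) powr (1 - s)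
                  - of_real 1 * (1 - s) * complex_of_real (real n + q) powr (- s))) sums V1"
     and KV1: "(\<lambda>k. ((1 - s) gchoose (k + 2)) * of_real 1 ^ (k + 2) * Zc q (s + of_nat (k + 1))) sums V1"
    using expansion_identity[OF _ Res aq1] q by auto
  obtain V2 where TV2: "(\<lambda>n. (-1)^n * (complex_of_real ((real n + q) + -1) powr (1 - s) - complex_of_real (real n + q) powr (1 - s)
                  - of_real (-1) * (1 - s) * complex_of_real (real n + q) powr (- s))) sums V2"
     and KV2: "(\<lambda>k. ((1 - s) gchoose (k + 2)) * of_real (-1) ^ (k + 2) * Zc q (s + of_nat (k + 1))) sums V2"
    using expansion_identity[OF _ Res aq2] q by auto
  have "(\<lambda>k. - (((1 - s) gchoose (k + 2)) * of_real 1 ^ (k + 2) * Zc q (s + of_nat (k + 1)) -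
              ((1 - s) gchoose (k + 2)) * of_real (-1) ^ (k + 2) * Zc q (s + of_nat (k + 1)))) sums (- (V1 - V2))"
    by (intro sums_minus sums_diff KV1 KV2)
  moreover have "(\<lambda>k. - (((1 - s) gchoose (k + 2)) * of_real 1 ^ (k + 2) * Zc q (s + of_nat (k + 1)) -
              ((1 - s) gchoose (k + 2)) * of_real (-1) ^ (k + 2) * Zc q (s + of_nat (k + 1)))) =
        (\<lambda>k. gg q (\<lambda>k. - (1 - (-1)^k)) k s)"
  proof (rule ext)
    fix k :: nat
    have e: "(of_real (-1) :: complex) ^ (k + 2) = (-1)^k" "(of_real 1 :: complex) ^ (k + 2) = 1" by simp_all
    show "- (((1 - s) gchoose (k + 2)) * of_real 1 ^ (k + 2) * Zc q (s + of_nat (k + 1)) -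
              ((1 - s) gchoose (k + 2)) * of_real (-1) ^ (k + 2) * Zc q (s + of_nat (k + 1))) =
          gg q (\<lambda>k. - (1 - (-1)^k)) k s"
      unfolding gg_def gchoose_Rp e by (rule ring3)
  qed
  ultimately have G: "(\<Sum>k. gg q (\<lambda>k. - (1 - (-1)^k)) k s) = - (V1 - V2)" by (simp add: sums_iff)
  define u where "u = (\<lambda>n::nat. complex_of_real (real n + (q - 1)) powr A)"
  have ut: "(\<lambda>N. u (Suc N) - u N) \<longlonglongrightarrow> 0"
    unfolding u_def by (rule powr_diff_tendsto) (use q Res in \<open>auto simp: A_def\<close>)
  have "(\<lambda>n. - ((-1)^n * (u n - u (n + 2))) - 2 * A * ((-1)^n * complex_of_real (real n + q) powr (- s))) sums
        (- (u 0 - u 1) - 2 * A * Zc q s)"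
    by (intro sums_diff sums_minus sums_mult tele_sums ut Zc_sums) (use q Res in auto)
  moreover have "(\<lambda>n. - ((-1)^n * (u n - u (n + 2))) - 2 * A * ((-1)^n * complex_of_real (real n + q) powr (- s))) =
     (\<lambda>n. (-1)^n * (complex_of_real ((real n + q) + 1) powr (1 - s) - complex_of_real (real n + q) powr (1 - s)
                  - of_real 1 * (1 - s) * complex_of_real (real n + q) powr (- s)) -
          (-1)^n * (complex_of_real ((real n + q) + -1) powr (1 - s) - complex_of_real (real n + q) powr (1 - s)
                  - of_real (-1) * (1 - s) * complex_of_real (real n + q) powr (- s)))"
  proof (rule ext)
    fix n :: nat
    have un: "u n = complex_of_real ((real n + q) + -1) powr (1 - s)" by (simp add: u_def A_def add_diff_eq)
    have un2: "u (n + 2) = complex_of_real ((real n + q) + 1) powr (1 - s)" by (simp add: u_def A_def add_ac)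
    show "- ((-1)^n * (u n - u (n + 2))) - 2 * A * ((-1)^n * complex_of_real (real n + q) powr (- s)) =
     (-1)^n * (complex_of_real ((real n + q) + 1) powr (1 - s) - complex_of_real (real n + q) powr (1 - s)
                  - of_real 1 * (1 - s) * complex_of_real (real n + q) powr (- s)) -
          (-1)^n * (complex_of_real ((real n + q) + -1) powr (1 - s) - complex_of_real (real n + q) powr (1 - s)
                  - of_real (-1) * (1 - s) * complex_of_real (real n + q) powr (- s))"
      unfolding un un2 A_def by (rule ring2)
  qed
  ultimately have V12: "V1 - V2 = - (u 0 - u 1) - 2 * A * Zc q s"
    using sums_diff[OF TV1 TV2] sums_unique2 by auto
  have u01: "u 0 = complex_of_real (q - 1) powr (1 - s)" "u 1 = complex_of_real q powr (1 - s)"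
    by (simp_all add: u_def A_def)
  have "(\<Sum>k. gg q (\<lambda>k. - (1 - (-1)^k)) k s) = u 0 - u 1 + 2 * A * Zc q s"
    unfolding G V12 by simp
  also have "\<dots> = 2 * ((1 - s) * Zc q s) - (complex_of_real q powr (1 - s) - complex_of_real (q - 1) powr (1 - s))"
    unfolding u01 A_def by (simp add: algebra_simps)
  finally show ?thesis .
qed


lemma sign_stir:
  assumes "j \<le> l"
  shows "(-1::complex)^j * of_int (stirling1s m (l - j + 1)) = (-1)^(m + l + 1) * of_nat (stirling m (l - j + 1))"
proof (cases "l - j + 1 \<le> m")
  case True
  define i where "i = l - j + 1"
  have e: "m + l + 1 = (j + (m - i)) + 2 * i" using True assms by (simp add: i_def)
  have "(-1::complex)^j * of_int (stirling1s m i) = (-1)^(j + (m - i)) * of_nat (stirling m i)"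
    by (simp add: stirling1s_def power_add)
  also have "(-1::complex)^(j + (m - i)) = (-1)^(m + l + 1)"
    unfolding e by (simp add: power_add power_mult)
  finally show ?thesis by (simp add: i_def)
next
  case False
  then show ?thesis by (simp add: stirling1s_def)
qed

lemma zetaE_deriv_eq: "q > 0 \<Longrightarrow> zetaE_deriv j z q = (deriv ^^ j) (Zc q) z"
proof -
  assume q: "q > 0"
  have "(\<lambda>w. zetaE w q) = Zc q" using zetaE_eq[OF q] by (simp add: fun_eq_iff)
  then show ?thesis by (simp add: zetaE_deriv_def)
qed

lemma inner_sum:
  assumes q: "q > 0"
  shows "(\<Sum>j\<le>l. (-1) ^ j / fact j * of_int (stirling1s m (l - j + 1)) * zetaE_deriv j (of_nat m) q) =
         (-1)^(m + l + 1) * (\<Sum>j\<le>l. of_nat (stirling m (l - j + 1)) / fact j * (deriv ^^ j) (Zc q) (of_nat m))"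
proof -
  have "(\<Sum>j\<le>l. (-1) ^ j / fact j * of_int (stirling1s m (l - j + 1)) * zetaE_deriv j (of_nat m) q) =
        (\<Sum>j\<le>l. (-1)^(m + l + 1) * (of_nat (stirling m (l - j + 1)) / fact j * (deriv ^^ j) (Zc q) (of_nat m)))"
  proof (rule sum.cong[OF refl])
    fix j assume "j \<in> {..l}"
    then have "(-1::complex)^j * of_int (stirling1s m (l - j + 1)) = (-1)^(m + l + 1) * of_nat (stirling m (l - j + 1))"
      by (intro sign_stir) auto
    then show "(-1) ^ j / fact j * of_int (stirling1s m (l - j + 1)) * zetaE_deriv j (of_nat m) q =
        (-1)^(m + l + 1) * (of_nat (stirling m (l - j + 1)) / fact j * (deriv ^^ j) (Zc q) (of_nat m))"
      by (simp add: zetaE_deriv_eq[OF q] field_simps)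
  qed
  then show ?thesis by (simp add: sum_distrib_left)
qed

lemma ring4:
  fixes a b u t F G S :: complex
  assumes "a * b = u" "F \<noteq> 0" "G \<noteq> 0"
  shows "a * t / F * (b * S) = u / (2 * G) * ((2 * t) / F * G * S)"
proof -
  have "u = a * b" using assms(1) by simp
  then show ?thesis using assms(2,3) by (simp add: field_simps)
qed

lemma ring5:
  fixes b u F G S :: complex
  assumes "b = u" "F \<noteq> 0" "G \<noteq> 0"
  shows "1 / F * (b * S) = u / (2 * G) * (2 / F * G * S)"
  using assms by (simp add: field_simps)

theorem theorem3p19:
  fixes l :: nat
  shows "(\<forall>q::real. q > 2 \<longrightarrow>
            (\<exists>S. (\<lambda>k. (-1) ^ (Suc k) * 2 ^ (Suc k) / fact (Suc k + 1) *
                    (\<Sum>j\<le>l. (-1) ^ j / fact j * of_int (stirling1s (Suc k + 1) (l - j + 1))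
                        * zetaE_deriv j (of_nat (Suc k + 1)) q)) sums S
               \<and> mod_stieltjes l q =
                   complex_of_real ((ln (q - 1) ^ (l + 1) - ln (q - 2) ^ (l + 1)) / (2 * (real l + 1)))
                   - fact l * S))
       \<and> (\<forall>q::real. q > 1 \<longrightarrow>
            (\<exists>S. (\<lambda>k. 1 / fact (2 * Suc k + 1) *
                    (\<Sum>j\<le>l. (-1) ^ j / fact j * of_int (stirling1s (2 * Suc k + 1) (l - j + 1))
                        * zetaE_deriv j (of_nat (2 * Suc k + 1)) q)) sums S
               \<and> mod_stieltjes l q =
                   complex_of_real ((ln q ^ (l + 1) - ln (q - 1) ^ (l + 1)) / (2 * (real l + 1)))
                   - fact l * S))"
proof (intro conjI allI impI)
  fix q :: real assume q: "q > 2"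
  define r where "r = min (1/2) ((q/2 - 1)/2)"
  have r: "0 < r" "r \<le> 1/2" "2 * (1 + r) < q" using q by (auto simp: r_def min_def field_simps)
  define c where "c = (\<lambda>k::nat. (-2::complex)^(k+2))"
  define \<kappa> :: complex where "\<kappa> = (-1)^l / (2 * fact (Suc l))"
  have cb: "norm (c k) \<le> 4 * 2 ^ k" for k by (simp add: c_def norm_power power_add)
  have gf1: "(\<lambda>k. \<kappa> * (deriv ^^ Suc l) (gg q c k) 1) sums (\<kappa> * (deriv ^^ Suc l) (\<lambda>s. \<Sum>k. gg q c k s) 1)"
   and gf2: "(-1)^l * (deriv ^^ l) (Zc q) 1 = complex_of_real ((ln (q - 1) ^ (l + 1) - ln (q - 2) ^ (l + 1)) / (2 * (real l + 1)))
            - fact l * (\<kappa> * (deriv ^^ Suc l) (\<lambda>s. \<Sum>k. gg q c k s) 1)"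
    using generic_final[of q r c 4 2 "q - 1" "q - 2" l] q r cb ident1[OF q _ r(2) r(3)]
    unfolding \<kappa>_def c_def by auto
  have tm: "(-1) ^ (Suc k) * 2 ^ (Suc k) / fact (Suc k + 1) *
                    (\<Sum>j\<le>l. (-1) ^ j / fact j * of_int (stirling1s (Suc k + 1) (l - j + 1))
                        * zetaE_deriv j (of_nat (Suc k + 1)) q) = \<kappa> * (deriv ^^ Suc l) (gg q c k) 1" for k
  proof -
    define \<Sigma> where "\<Sigma> = (\<Sum>j\<le>l. of_nat (stirling (k+2) (l - j + 1)) / fact j * (deriv ^^ j) (Zc q) (of_nat (k+2)))"
    have m: "Suc k + 1 = k + 2" by simp
    have q0: "q > 0" using q by simp
    have lhs: "(-1) ^ (Suc k) * 2 ^ (Suc k) / fact (Suc k + 1) *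
                    (\<Sum>j\<le>l. (-1) ^ j / fact j * of_int (stirling1s (Suc k + 1) (l - j + 1))
                        * zetaE_deriv j (of_nat (Suc k + 1)) q) = (-1) ^ (Suc k) * 2 ^ (Suc k) / fact (k + 2) * ((-1)^(k + 2 + l + 1) * \<Sigma>)"
      unfolding m inner_sum[OF q0, where l=l and m="k+2"] \<Sigma>_def ..
    have rhs: "\<kappa> * (deriv ^^ Suc l) (gg q c k) 1 = \<kappa> * (c k * (-1)^(k+2) / fact (k+2) * fact (Suc l) * \<Sigma>)"
      unfolding gg_deriv[OF q0] \<Sigma>_def ..
    have s1: "(-1::complex) ^ (Suc k) * (-1)^(k + 2 + l + 1) = (-1)^l"
    proof -
      have "Suc k + (k + 2 + l + 1) = l + 2 * (k + 2)" by simp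
      then have e: "Suc k + (k + 2 + l + 1) = l + 2 * (k + 2)" .
      have "(-1::complex)^Suc k * (-1)^(k + 2 + l + 1) = (-1)^(Suc k + (k + 2 + l + 1))" by (simp only: power_add)
      also have "\<dots> = (-1)^l * ((-1)^2)^(k + 2)" unfolding e power_add power_mult ..
      also have "\<dots> = (-1)^l" by simp
      finally show ?thesis .
    qed
    have s2: "c k * (-1)^(k+2) = 2^(k+2)"
      by (simp add: c_def flip: power_mult_distrib)
    have s2': "c k * (-1)^(k+2) = 2 * 2 ^ Suc k" unfolding s2 by simp
    have "(-1) ^ (Suc k) * 2 ^ (Suc k) / fact (k + 2) * ((-1)^(k + 2 + l + 1) * \<Sigma>) =
        (-1)^l / (2 * fact (Suc l)) * ((2 * 2 ^ Suc k) / fact (k + 2) * fact (Suc l) * \<Sigma>)"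
      by (rule ring4[OF s1 fact_nonzero fact_nonzero])
    then show ?thesis unfolding lhs rhs unfolding \<kappa>_def s2' .
  qed
  show "\<exists>S. (\<lambda>k. (-1) ^ (Suc k) * 2 ^ (Suc k) / fact (Suc k + 1) *
                    (\<Sum>j\<le>l. (-1) ^ j / fact j * of_int (stirling1s (Suc k + 1) (l - j + 1))
                        * zetaE_deriv j (of_nat (Suc k + 1)) q)) sums S
               \<and> mod_stieltjes l q =
                   complex_of_real ((ln (q - 1) ^ (l + 1) - ln (q - 2) ^ (l + 1)) / (2 * (real l + 1)))
                   - fact l * S"
    using gf1 gf2 mod_stieltjes_eq[of q l] q unfolding tm by auto
next
  fix q :: real assume q: "q > 1"
  show "\<exists>S. (\<lambda>k. 1 / fact (2 * Suc k + 1) *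
                    (\<Sum>j\<le>l. (-1) ^ j / fact j * of_int (stirling1s (2 * Suc k + 1) (l - j + 1))
                        * zetaE_deriv j (of_nat (2 * Suc k + 1)) q)) sums S
               \<and> mod_stieltjes l q =
                   complex_of_real ((ln q ^ (l + 1) - ln (q - 1) ^ (l + 1)) / (2 * (real l + 1)))
                   - fact l * S"
  proof -
    define r where "r = min (1/2) ((q - 1)/2)"
    have r: "0 < r" "r \<le> 1/2" "1 + r < q" using q by (auto simp: r_def min_def field_simps)
    define c where "c = (\<lambda>k::nat. - (1 - (-1::complex)^k))"
    define \<kappa> :: complex where "\<kappa> = (-1)^l / (2 * fact (Suc l))"
    have q0: "q > 0" using q by simp
    have cb: "norm (c k) \<le> 2 * 1 ^ k" for k by (cases "even k") (auto simp: c_def)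
    have gf1: "(\<lambda>k. \<kappa> * (deriv ^^ Suc l) (gg q c k) 1) sums (\<kappa> * (deriv ^^ Suc l) (\<lambda>s. \<Sum>k. gg q c k s) 1)"
     and gf2: "(-1)^l * (deriv ^^ l) (Zc q) 1 = complex_of_real ((ln q ^ (l + 1) - ln (q - 1) ^ (l + 1)) / (2 * (real l + 1)))
              - fact l * (\<kappa> * (deriv ^^ Suc l) (\<lambda>s. \<Sum>k. gg q c k s) 1)"
      using generic_final[of q r c 2 1 q "q - 1" l] q r cb ident2[OF q _ r(2) r(3)]
      unfolding \<kappa>_def c_def by auto
    have sm: "strict_mono (\<lambda>i::nat. 2 * i + 1)" by (auto simp: strict_mono_def)
    have z: "\<kappa> * (deriv ^^ Suc l) (gg q c k) 1 = 0" if "k \<notin> range (\<lambda>i::nat. 2 * i + 1)" for k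
    proof -
      have "even k"
      proof (rule ccontr)
        assume "\<not> even k"
        then have "k = 2 * (k div 2) + 1" by presburger
        then show False using that by blast
      qed
      then have "c k = 0" by (simp add: c_def)
      then show ?thesis unfolding gg_deriv[OF q0] by simp
    qed
    have gf1': "(\<lambda>i. \<kappa> * (deriv ^^ Suc l) (gg q c (2 * i + 1)) 1) sums (\<kappa> * (deriv ^^ Suc l) (\<lambda>s. \<Sum>k. gg q c k s) 1)"
      using sums_mono_reindex[OF sm, of "\<lambda>k. \<kappa> * (deriv ^^ Suc l) (gg q c k) 1"] z gf1 by blast
    have tm: "1 / fact (2 * Suc i + 1) *
                    (\<Sum>j\<le>l. (-1) ^ j / fact j * of_int (stirling1s (2 * Suc i + 1) (l - j + 1))
                        * zetaE_deriv j (of_nat (2 * Suc i + 1)) q) = \<kappa> * (deriv ^^ Suc l) (gg q c (2 * i + 1)) 1" for i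
    proof -
      define k where "k = 2 * i + 1"
      define \<Sigma> where "\<Sigma> = (\<Sum>j\<le>l. of_nat (stirling (k+2) (l - j + 1)) / fact j * (deriv ^^ j) (Zc q) (of_nat (k+2)))"
      have m: "2 * Suc i + 1 = k + 2" by (simp add: k_def)
      have lhs: "1 / fact (2 * Suc i + 1) *
                    (\<Sum>j\<le>l. (-1) ^ j / fact j * of_int (stirling1s (2 * Suc i + 1) (l - j + 1))
                        * zetaE_deriv j (of_nat (2 * Suc i + 1)) q) = 1 / fact (k + 2) * ((-1)^(k + 2 + l + 1) * \<Sigma>)"
        unfolding m inner_sum[OF q0, where l=l and m="k+2"] \<Sigma>_def ..
      have rhs: "\<kappa> * (deriv ^^ Suc l) (gg q c k) 1 = \<kappa> * (c k * (-1)^(k+2) / fact (k+2) * fact (Suc l) * \<Sigma>)"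
        unfolding gg_deriv[OF q0] \<Sigma>_def ..
      have s1: "(-1::complex)^(k + 2 + l + 1) = (-1)^l"
      proof -
        have e: "k + 2 + l + 1 = l + 2 * (i + 2)" by (simp add: k_def)
        show ?thesis unfolding e power_add power_mult by simp
      qed
      have s2: "c k * (-1)^(k+2) = 2"
        by (simp add: c_def k_def)
      have "1 / fact (k + 2) * ((-1)^(k + 2 + l + 1) * \<Sigma>) =
          (-1)^l / (2 * fact (Suc l)) * (2 / fact (k + 2) * fact (Suc l) * \<Sigma>)"
        by (rule ring5[OF s1 fact_nonzero fact_nonzero])
      then show ?thesis unfolding k_def[symmetric] lhs rhs unfolding \<kappa>_def s2 .
    qed
    show ?thesis
      using gf1' gf2 mod_stieltjes_eq[of q l] q unfolding tm by auto
  qed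
qed


end
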